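(* Let $\theta_1,\theta_2>0$, $\theta=\theta_1+\theta_2$, $p=\theta_1/\theta\in(0,1)$, $\beta>0$, $\phi=\theta/\beta$, and consider the Fleming–Viot process on $[0,1]$ with generator \[ \mathcal{L}g(x)=x\big[g(1)-g(x)\big]+(1-x)\big[g(0)-g(x)\big]+v(x)g'(x),\qquad v(x)=\tfrac12(\theta_1-\theta x)+\tfrac12\beta x(1-x). \] Let $r_1,r_2=\frac12\big(1-\phi\pm\sqrt{(1-\phi)^2+4\phi p}\big)$ be the roots of $\chi(1-\chi)+\phi(p-\chi)=0$, so that $0<r_1<1$ and $r_2<0$. Then the replacement transition probabilities at time $t$ are \[ p_{11}(t)=\mu(t)=r_1+(r_1-r_2)\frac{\frac{1-r_1}{1-r_2}e^{-\beta(r_1-r_2)t/2}}{1-\frac{1-r_1}{1-r_2}e^{-\beta(r_1-r_2)t/2}},\qquad p_{21}(t)=\nu(t)=r_1+(r_1-r_2)\frac{\frac{r_1}{r_2}e^{-\beta(r_1-r_2)t/2}}{1-\frac{r_1}{r_2}e^{-\beta(r_1-r_2)t/2}}, \] with $p_{12}(t)=1-p_{11}(t)$, $p_{22}(t)=1-p_{21}(t)$, and $P=\mathbb{E}[P(T)]$ for $T$ exponential with rate 1. The stationary density of the process is \begin{align*} &\pi_1\frac{2}{\beta}\Big(\frac{\xi-r_1}{\xi-r_2}\cdot\frac{1-r_2}{1-r_1}\Big)^{\frac{2}{\beta(r_1-r_2)}-1}\frac{1}{(\xi-r_2)^2}\cdot\frac{1-r_2}{1-r_1}\,I\{r_1<\xi<1\}\\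 &+\pi_2\frac{2}{\beta}\Big(\frac{r_1-\xi}{\xi-r_2}\cdot\frac{-r_2}{r_1}\Big)^{\frac{2}{\beta(r_1-r_2)}-1}\frac{1}{(\xi-r_2)^2}\cdot\frac{-r_2}{r_1}\,I\{0<\xi<r_1\}, \end{align*} where $(\pi_1,\pi_2)$ is the stationary distribution of $P$.
   Context: The process describes the frequency of type 1 in a two-type population under the star-shaped model with mutation and selection: at the times of a rate-1 Poisson process the whole population is replaced by all type 1 individuals (with probability equal to the current type-1 frequency) or all type 2 individuals, and between replacements the frequency follows $\dot\chi=v(\chi)$. $\mu(t)$ ($\nu(t)$) is the solution of $\dot\chi=v(\chi)$ with $\chi(0)=1$ ($\chi(0)=0$); $P(t)=(p_{ij}(t))$ gives the probabilities that, starting from an all-type-$i$ replacement, an individual at time $t$ (before the next replacement) is of type $j$; $P$ is the transition matrix between the types of successive replacements. *)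

theory Defs
  imports "HOL-Probability.Probability"
begin

definition drift :: "real \<Rightarrow> real \<Rightarrow> real \<Rightarrow> real \<Rightarrow> real" where
  "drift \<theta>1 \<theta>2 \<beta> x = (\<theta>1 - (\<theta>1 + \<theta>2) * x) / 2 + \<beta> * x * (1 - x) / 2"

definition phi :: "real \<Rightarrow> real \<Rightarrow> real \<Rightarrow> real" where
  "phi \<theta>1 \<theta>2 \<beta> = (\<theta>1 + \<theta>2) / \<beta>"

definition pp :: "real \<Rightarrow> real \<Rightarrow> real" where
  "pp \<theta>1 \<theta>2 = \<theta>1 / (\<theta>1 + \<theta>2)"

definition root1 :: "real \<Rightarrow> real \<Rightarrow> real \<Rightarrow> real" where
  "root1 \<theta>1 \<theta>2 \<beta> = (1 - phi \<theta>1 \<theta>2 \<beta>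
     + sqrt ((1 - phi \<theta>1 \<theta>2 \<beta>)\<^sup>2 + 4 * phi \<theta>1 \<theta>2 \<beta> * pp \<theta>1 \<theta>2)) / 2"

definition root2 :: "real \<Rightarrow> real \<Rightarrow> real \<Rightarrow> real" where
  "root2 \<theta>1 \<theta>2 \<beta> = (1 - phi \<theta>1 \<theta>2 \<beta>
     - sqrt ((1 - phi \<theta>1 \<theta>2 \<beta>)\<^sup>2 + 4 * phi \<theta>1 \<theta>2 \<beta> * pp \<theta>1 \<theta>2)) / 2"

definition mu_formula :: "real \<Rightarrow> real \<Rightarrow> real \<Rightarrow> real \<Rightarrow> real" where
  "mu_formula \<theta>1 \<theta>2 \<beta> t =
    (let r1 = root1 \<theta>1 \<theta>2 \<beta>; r2 = root2 \<theta>1 \<theta>2 \<beta>;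
         q = (1 - r1) / (1 - r2) * exp (- \<beta> * (r1 - r2) * t / 2)
     in r1 + (r1 - r2) * (q / (1 - q)))"

definition nu_formula :: "real \<Rightarrow> real \<Rightarrow> real \<Rightarrow> real \<Rightarrow> real" where
  "nu_formula \<theta>1 \<theta>2 \<beta> t =
    (let r1 = root1 \<theta>1 \<theta>2 \<beta>; r2 = root2 \<theta>1 \<theta>2 \<beta>;
         q = r1 / r2 * exp (- \<beta> * (r1 - r2) * t / 2)
     in r1 + (r1 - r2) * (q / (1 - q)))"

text \<open>Transition matrix between types of successive replacements:
  P = E[P(T)], T ~ Exp(1), where p11 = mu, p12 = 1 - mu, p21 = nu, p22 = 1 - nu.\<close>

definition Pbar :: "(real \<Rightarrow> real) \<Rightarrow> real" where
  "Pbar f = (LINT t:{0..}|lborel. exp (- t) * f t)"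

definition stationary_P :: "(real \<Rightarrow> real) \<Rightarrow> (real \<Rightarrow> real) \<Rightarrow> real \<Rightarrow> real \<Rightarrow> bool" where
  "stationary_P \<mu> \<nu> \<pi>1 \<pi>2 \<longleftrightarrow>
     \<pi>1 \<ge> 0 \<and> \<pi>2 \<ge> 0 \<and> \<pi>1 + \<pi>2 = 1 \<and>
     \<pi>1 = \<pi>1 * Pbar \<mu> + \<pi>2 * Pbar \<nu> \<and>
     \<pi>2 = \<pi>1 * Pbar (\<lambda>t. 1 - \<mu> t) + \<pi>2 * Pbar (\<lambda>t. 1 - \<nu> t)"

definition gen :: "real \<Rightarrow> real \<Rightarrow> real \<Rightarrow> (real \<Rightarrow> real) \<Rightarrow> (real \<Rightarrow> real) \<Rightarrow> real \<Rightarrow> real" where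
  "gen \<theta>1 \<theta>2 \<beta> g g' x = x * (g 1 - g x) + (1 - x) * (g 0 - g x) + drift \<theta>1 \<theta>2 \<beta> x * g' x"

definition stationary_gen :: "real \<Rightarrow> real \<Rightarrow> real \<Rightarrow> real measure \<Rightarrow> bool" where
  "stationary_gen \<theta>1 \<theta>2 \<beta> M \<longleftrightarrow>
     prob_space M \<and> sets M = sets borel \<and> emeasure M {0..1} = 1 \<and>
     (\<forall>g g'. (\<forall>x\<in>{0..1}. (g has_real_derivative g' x) (at x within {0..1})) \<and>
             continuous_on {0..1} g' \<longrightarrow>
             (LINT x:{0..1}|M. gen \<theta>1 \<theta>2 \<beta> g g' x) = 0)"

definition stat_density :: "real \<Rightarrow> real \<Rightarrow> real \<Rightarrow> real \<Rightarrow> real \<Rightarrow> real \<Rightarrow> real" where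
  "stat_density \<theta>1 \<theta>2 \<beta> \<pi>1 \<pi>2 \<xi> =
    (let r1 = root1 \<theta>1 \<theta>2 \<beta>; r2 = root2 \<theta>1 \<theta>2 \<beta>;
         e = 2 / (\<beta> * (r1 - r2)) - 1
     in \<pi>1 * (2 / \<beta>) * (((\<xi> - r1) / (\<xi> - r2) * ((1 - r2) / (1 - r1))) powr e)
          * (1 / (\<xi> - r2)\<^sup>2) * ((1 - r2) / (1 - r1)) * indicator {r1<..<1} \<xi>
      + \<pi>2 * (2 / \<beta>) * (((r1 - \<xi>) / (\<xi> - r2) * (- r2 / r1)) powr e)
          * (1 / (\<xi> - r2)\<^sup>2) * (- r2 / r1) * indicator {0<..<r1} \<xi>)"

end

theory Submission
  imports Defs
begin

locale fv =
  fixes t1 t2 b :: real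
  assumes t1: "t1 > 0" and t2: "t2 > 0" and b: "b > 0"
begin

abbreviation "r1 \<equiv> root1 t1 t2 b"
abbreviation "r2 \<equiv> root2 t1 t2 b"
abbreviation "ph \<equiv> phi t1 t2 b"
abbreviation "p \<equiv> pp t1 t2"
abbreviation "v \<equiv> drift t1 t2 b"

lemma ph_pos: "ph > 0" using t1 t2 b by (simp add: phi_def)
lemma p_bounds: "0 < p" "p < 1" using t1 t2 by (auto simp: pp_def field_simps)

lemma disc: "sqrt ((1 - ph)\<^sup>2 + 4 * ph * p) > \<bar>1 - ph\<bar>"
proof -
  have "(1 - ph)\<^sup>2 < (1 - ph)\<^sup>2 + 4 * ph * p" using ph_pos p_bounds by simp
  then have "sqrt ((1 - ph)\<^sup>2) < sqrt ((1 - ph)\<^sup>2 + 4 * ph * p)" by (rule real_sqrt_less_mono)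
  then show ?thesis by simp
qed

lemma disc2: "sqrt ((1 - ph)\<^sup>2 + 4 * ph * p) < 1 + ph"
proof -
  have "(1 - ph)\<^sup>2 + 4 * ph * p < (1 + ph)\<^sup>2" using ph_pos p_bounds
    by (simp add: power2_eq_square algebra_simps)
  then have "sqrt ((1 - ph)\<^sup>2 + 4 * ph * p) < sqrt ((1 + ph)\<^sup>2)" by (rule real_sqrt_less_mono)
  then show ?thesis using ph_pos by simp
qed

lemma r1_pos: "0 < r1" using disc unfolding root1_def by (simp add: abs_if split: if_splits; linarith)
lemma r1_lt1: "r1 < 1" using disc2 unfolding root1_def by simp
lemma r2_neg: "r2 < 0" using disc unfolding root2_def by (simp add: abs_if split: if_splits; linarith)
lemma r12: "r2 < r1" using r1_pos r2_neg by linarith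

lemma r_sum: "r1 + r2 = 1 - ph" unfolding root1_def root2_def by (simp add: field_simps)
lemma r_prod: "r1 * r2 = - ph * p"
proof -
  have D: "(sqrt ((1 - ph)\<^sup>2 + 4 * ph * p))\<^sup>2 = (1 - ph)\<^sup>2 + 4 * ph * p"
    using ph_pos p_bounds by (intro real_sqrt_pow2) (auto intro: add_nonneg_nonneg)
  show ?thesis unfolding root1_def root2_def
    using D by (simp add: power2_eq_square algebra_simps)
qed

lemma v_fact: "v x = - (b / 2) * ((x - r1) * (x - r2))"
proof -
  have "(x - r1) * (x - r2) = x\<^sup>2 - (r1 + r2) * x + r1 * r2" by (simp add: power2_eq_square algebra_simps)
  also have "\<dots> = x\<^sup>2 - (1 - ph) * x - ph * p" by (simp add: r_sum r_prod)
  finally have e: "(x - r1) * (x - r2) = x\<^sup>2 - (1 - ph) * x - ph * p" .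
  have "t1 + t2 \<noteq> 0" using t1 t2 by simp
  then have pp: "ph * p = t1 / b" using b by (simp add: phi_def pp_def)
  have "v x = - (b / 2) * (x\<^sup>2 - (1 - (t1 + t2) / b) * x - t1 / b)"
    using b by (simp add: drift_def field_simps power2_eq_square)
  then show ?thesis unfolding e pp by (simp add: phi_def)
qed

lemma aux_alg: "2 * A * (- Bq * A) * E - 2 * K * (A\<^sup>2 * E) = 2 * E * (A\<^sup>2 * (- Bq) - A\<^sup>2 * K)"
  for A Bq E K :: real by (simp add: power2_eq_square algebra_simps)

lemma ode_unique:
  fixes x z :: "real \<Rightarrow> real"
  assumes dx: "\<And>t. t \<ge> 0 \<Longrightarrow> (x has_real_derivative v (x t)) (at t within {0..})"
    and dz: "\<And>t. t \<ge> 0 \<Longrightarrow> (z has_real_derivative v (z t)) (at t within {0..})"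
    and x0: "x 0 = z 0" and T: "T \<ge> 0"
  shows "x T = z T"
proof (cases "T = 0")
  case True then show ?thesis using x0 by simp
next
  case False
  then have T0: "0 < T" using T by simp
  have cx: "continuous_on {0..} x" by (rule DERIV_continuous_on) (use dx in auto)
  have cz: "continuous_on {0..} z" by (rule DERIV_continuous_on) (use dz in auto)
  have cx': "continuous_on {0..T} x" using continuous_on_subset[OF cx] by auto
  have cz': "continuous_on {0..T} z" using continuous_on_subset[OF cz] by auto
  have "continuous_on {0..T} (\<lambda>t. \<bar>b / 2 * (x t + z t - r1 - r2)\<bar>)"
    using cx' cz' by (intro continuous_intros)
  then obtain t0 where "t0 \<in> {0..T}" and Kb: "\<And>t. t \<in> {0..T} \<Longrightarrow> \<bar>b / 2 * (x t + z t - r1 - r2)\<bar> \<le> \<bar>b / 2 * (x t0 + z t0 - r1 - r2)\<bar>"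
    using continuous_attains_sup[of "{0..T}"] T by fastforce
  define K where "K = \<bar>b / 2 * (x t0 + z t0 - r1 - r2)\<bar>"
  define W where "W t = (x t - z t)\<^sup>2 * exp (- 2 * K * t)" for t
  have vdiff: "v (x t) - v (z t) = - (b / 2 * (x t + z t - r1 - r2)) * (x t - z t)" for t
    unfolding v_fact by (simp add: field_simps)
  have dW: "(W has_real_derivative 2 * (x t - z t) * (v (x t) - v (z t)) * exp (- 2 * K * t)
      - 2 * K * ((x t - z t)\<^sup>2 * exp (- 2 * K * t))) (at t)" if "0 < t" for t
  proof -
    have i: "t \<in> interior {0::real..}" using that by simp
    have "(x has_real_derivative v (x t)) (at t)" using dx[of t] that at_within_interior[OF i] by simp
    moreover have "(z has_real_derivative v (z t)) (at t)" using dz[of t] that at_within_interior[OF i] by simp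
    ultimately show ?thesis unfolding W_def
      by (auto intro!: derivative_eq_intros simp: power2_eq_square algebra_simps)
  qed
  have "W T - W 0 \<le> 0"
  proof -
    have "continuous_on {0..T} W" unfolding W_def
      using cx' cz' by (intro continuous_intros)
    moreover have "\<And>t. 0 < t \<Longrightarrow> t < T \<Longrightarrow> W differentiable (at t)"
      using dW real_differentiable_def by blast
    ultimately obtain l s where s: "0 < s" "s < T" "DERIV W s :> l" "W T - W 0 = (T - 0) * l"
      using MVT[OF T0] by blast
    have l: "l = 2 * (x s - z s) * (v (x s) - v (z s)) * exp (- 2 * K * s)
      - 2 * K * ((x s - z s)\<^sup>2 * exp (- 2 * K * s))"
      using DERIV_unique[OF s(3) dW[OF s(1)]] .
    have "- (b / 2 * (x s + z s - r1 - r2)) \<le> K" using Kb[of s] s unfolding K_def by auto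
    then have "(x s - z s)\<^sup>2 * (- (b / 2 * (x s + z s - r1 - r2))) \<le> (x s - z s)\<^sup>2 * K"
      by (intro mult_left_mono) auto
    have "l = 2 * exp (- 2 * K * s) * ((x s - z s)\<^sup>2 * (- (b / 2 * (x s + z s - r1 - r2))) - (x s - z s)\<^sup>2 * K)"
      unfolding l vdiff by (rule aux_alg)
    also have "\<dots> \<le> 0" using \<open>(x s - z s)\<^sup>2 * (- (b / 2 * (x s + z s - r1 - r2))) \<le> (x s - z s)\<^sup>2 * K\<close>
      by (intro mult_nonneg_nonpos) auto
    finally have "l \<le> 0" .
    then show ?thesis using s(4) T0 by (simp add: mult_nonneg_nonpos)
  qed
  moreover have "W 0 = 0" unfolding W_def using x0 by simp
  ultimately have "W T \<le> 0" by simp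
  then have "(x T - z T)\<^sup>2 \<le> 0" unfolding W_def by (simp add: mult_le_0_iff)
  then show ?thesis by simp
qed

definition "cc = b * (r1 - r2) / 2"
definition "qf C t = C * exp (- b * (r1 - r2) * t / 2)"
definition "sol C t = r1 + (r1 - r2) * (qf C t / (1 - qf C t))"

lemma cc_pos: "cc > 0" using b r12 by (simp add: cc_def)

lemma sol_deriv:
  assumes "qf C t \<noteq> 1"
  shows "(sol C has_real_derivative v (sol C t)) (at t)"
proof -
  have dq: "(qf C has_real_derivative (- b * (r1 - r2) / 2 * qf C t)) (at t)" for t
    unfolding qf_def by (auto intro!: derivative_eq_intros simp: field_simps)
  have "1 - qf C t \<noteq> 0" using assms by simp
  define Q where "Q = - b * (r1 - r2) / 2 * qf C t"
  have d1: "((\<lambda>s. 1 - qf C s) has_real_derivative (0 - Q)) (at t)"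
    unfolding Q_def by (intro derivative_intros dq)
  note d2 = DERIV_divide[OF dq[of t, folded Q_def] d1 \<open>1 - qf C t \<noteq> 0\<close>]
  note d3 = DERIV_add[OF DERIV_const[of r1] DERIV_cmult[OF d2, of "r1 - r2"]]
  have alg: "0 + (r1 - r2) * ((Q * (1 - q) - q * (0 - Q)) / ((1 - q) * (1 - q))) = (r1 - r2) * (Q / (1 - q)\<^sup>2)" for q
    by (simp add: power2_eq_square algebra_simps add_divide_distrib[symmetric])
  have d: "(sol C has_real_derivative (r1 - r2) * ((- b * (r1 - r2) / 2 * qf C t) / (1 - qf C t)\<^sup>2)) (at t)"
  proof -
    have "sol C = (\<lambda>s. r1 + (r1 - r2) * (qf C s / (1 - qf C s)))" by (rule ext) (simp add: sol_def)
    moreover note DERIV_cong[OF d3 alg[of "qf C t"]]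
    ultimately show ?thesis unfolding Q_def by simp
  qed
  have e1: "sol C t - r1 = (r1 - r2) * qf C t / (1 - qf C t)"
    and e2: "sol C t - r2 = (r1 - r2) / (1 - qf C t)"
    unfolding sol_def using \<open>1 - qf C t \<noteq> 0\<close> by (simp_all add: field_simps)
  have "v (sol C t) = (r1 - r2) * ((- b * (r1 - r2) / 2 * qf C t) / (1 - qf C t)\<^sup>2)"
    unfolding v_fact e1 e2 by (simp add: power2_eq_square)
  then show ?thesis using d by simp
qed

end

lemma ibp_gen:
  fixes a bb Ha Hb :: real and f H V g g' :: "real \<Rightarrow> real"
  assumes ab: "a < bb" "0 \<le> a" "bb \<le> 1"
  and Hd: "\<And>x. a < x \<Longrightarrow> x < bb \<Longrightarrow> (H has_real_derivative - f x) (at x)"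
  and fc: "\<And>x. a < x \<Longrightarrow> x < bb \<Longrightarrow> isCont f x"
  and fnn: "\<And>x. a < x \<Longrightarrow> x < bb \<Longrightarrow> 0 \<le> f x"
  and HV: "\<And>x. a < x \<Longrightarrow> x < bb \<Longrightarrow> H x = V x * f x"
  and Ha: "(H \<longlongrightarrow> Ha) (at_right a)" and Hb: "(H \<longlongrightarrow> Hb) (at_left bb)"
  and gd: "\<forall>x\<in>{0..1}. (g has_real_derivative g' x) (at x within {0..1})"
  and g'c: "continuous_on {0..1} g'"
  and Vc: "continuous_on {0..1} V"
  shows "set_integrable lborel {a<..<bb} f" "(LBINT x=ereal a..ereal bb. f x) = Ha - Hb"
    "set_integrable lborel {a<..<bb} (\<lambda>x. (V x * g' x - g x) * f x)"
    "(LBINT x=ereal a..ereal bb. (V x * g' x - g x) * f x) = g bb * Hb - g a * Ha"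
proof -
  have F: "DERIV (\<lambda>x. - H x) x :> f x" if "ereal a < ereal x" "ereal x < ereal bb" for x
    using Hd[of x] that by (auto intro!: derivative_eq_intros)
  have A: "(((\<lambda>x. - H x) \<circ> real_of_ereal) \<longlongrightarrow> - Ha) (at_right (ereal a))"
    unfolding ereal_tendsto_simps1 by (intro tendsto_intros Ha)
  have B: "(((\<lambda>x. - H x) \<circ> real_of_ereal) \<longlongrightarrow> - Hb) (at_left (ereal bb))"
    unfolding ereal_tendsto_simps1 by (intro tendsto_intros Hb)
  have fnnAE: "AE x in lborel. ereal a < ereal x \<longrightarrow> ereal x < ereal bb \<longrightarrow> 0 \<le> f x"
    using fnn by auto
  have ab': "ereal a < ereal bb" using ab by simp
  have fc': "\<And>x. ereal a < ereal x \<Longrightarrow> ereal x < ereal bb \<Longrightarrow> isCont f x" using fc by simp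
  note ftc = interval_integral_FTC_nonneg[OF ab' F fc' fnnAE A B]
  show fi: "set_integrable lborel {a<..<bb} f" using ftc(1) by simp
  show "(LBINT x=ereal a..ereal bb. f x) = Ha - Hb" using ftc(2) by simp
  have gc: "continuous_on {0..1} g" by (rule DERIV_continuous_on) (use gd in auto)
  obtain C where C: "\<And>x. x \<in> {0..1} \<Longrightarrow> \<bar>V x * g' x - g x\<bar> \<le> C"
  proof -
    have "continuous_on {0..1} (\<lambda>x. \<bar>V x * g' x - g x\<bar>)" using Vc g'c gc by (intro continuous_intros)
    from continuous_attains_sup[OF compact_Icc _ this] obtain x0 where
      "x0 \<in> {0..1::real}" "\<forall>y\<in>{0..1}. \<bar>V y * g' y - g y\<bar> \<le> \<bar>V x0 * g' x0 - g x0\<bar>"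
      by auto
    then show ?thesis using that by blast
  qed
  have sub: "{a<..<bb} \<subseteq> {0..1}" using ab by auto
  have cf: "continuous_on {a<..<bb} f" using fc by (intro continuous_at_imp_continuous_on) auto
  have ch: "continuous_on {a<..<bb} (\<lambda>x. (V x * g' x - g x) * f x)"
    using continuous_on_subset[OF Vc sub] continuous_on_subset[OF g'c sub] continuous_on_subset[OF gc sub] cf
    by (intro continuous_intros)
  show hi: "set_integrable lborel {a<..<bb} (\<lambda>x. (V x * g' x - g x) * f x)"
    unfolding set_integrable_def
  proof (rule Bochner_Integration.integrable_bound[where f="\<lambda>x. indicator {a<..<bb} x *\<^sub>R (C * f x)"])
    show "integrable lborel (\<lambda>x. indicator {a<..<bb} x *\<^sub>R (C * f x))"
    proof -
      have "integrable lborel (\<lambda>x. C * (indicator {a<..<bb} x * f x))"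
        by (rule integrable_mult_right) (use fi in \<open>simp add: set_integrable_def\<close>)
      then show ?thesis by (simp add: ac_simps)
    qed
    show "(\<lambda>x. indicator {a<..<bb} x *\<^sub>R ((V x * g' x - g x) * f x)) \<in> borel_measurable lborel"
      using borel_measurable_continuous_on_indicator[OF _ ch] by simp
    show "AE x in lborel. norm (indicator {a<..<bb} x *\<^sub>R ((V x * g' x - g x) * f x))
        \<le> norm (indicator {a<..<bb} x *\<^sub>R (C * f x))"
    proof (rule AE_I2)
      fix x show "norm (indicator {a<..<bb} x *\<^sub>R ((V x * g' x - g x) * f x))
        \<le> norm (indicator {a<..<bb} x *\<^sub>R (C * f x))"
      proof (cases "x \<in> {a<..<bb}")
        case True
        then have "\<bar>V x * g' x - g x\<bar> \<le> C" "0 \<le> f x" using C sub fnn by auto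
        then show ?thesis using True by (simp add: abs_mult mult_right_mono)
      qed simp
    qed
  qed
  have G: "((\<lambda>x. g x * H x) has_vector_derivative (V x * g' x - g x) * f x) (at x)"
    if "ereal a < ereal x" "ereal x < ereal bb" for x
  proof -
    have x: "a < x" "x < bb" using that by auto
    have xi: "x \<in> interior {0..1::real}" using x ab by simp
    have gw: "(g has_real_derivative g' x) (at x within {0..1})" using gd x ab by simp
    have gx: "(g has_real_derivative g' x) (at x)" using gw unfolding at_within_interior[OF xi] .
    have "((\<lambda>x. g x * H x) has_real_derivative g' x * H x + (- f x) * g x) (at x)"
      by (rule DERIV_mult[OF gx Hd[OF x]])
    moreover have "g' x * H x + (- f x) * g x = (V x * g' x - g x) * f x" using HV[OF x] by (simp add: algebra_simps)
    ultimately show ?thesis by (simp add: has_real_derivative_iff_has_vector_derivative)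
  qed
  have gab: "continuous_on {a..bb} g" using continuous_on_subset[OF gc] ab by auto
  have A2: "(((\<lambda>x. g x * H x) \<circ> real_of_ereal) \<longlongrightarrow> g a * Ha) (at_right (ereal a))"
    unfolding ereal_tendsto_simps1 by (rule tendsto_mult[OF continuous_on_Icc_at_rightD[OF gab ab(1)] Ha])
  have B2: "(((\<lambda>x. g x * H x) \<circ> real_of_ereal) \<longlongrightarrow> g bb * Hb) (at_left (ereal bb))"
    unfolding ereal_tendsto_simps1 by (rule tendsto_mult[OF continuous_on_Icc_at_leftD[OF gab ab(1)] Hb])
  have hc: "isCont (\<lambda>x. (V x * g' x - g x) * f x) x" if "ereal a < ereal x" "ereal x < ereal bb" for x
  proof -
    have "x \<in> {a<..<bb}" using that by auto
    then show ?thesis using ch by (metis continuous_on_eq_continuous_at open_greaterThanLessThan)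
  qed
  show "(LBINT x=ereal a..ereal bb. (V x * g' x - g x) * f x) = g bb * Hb - g a * Ha"
    using interval_integral_FTC_integrable[of "ereal a" "ereal bb" "\<lambda>x. g x * H x", OF ab' G hc _ A2 B2] hi
    by simp
qed

context fv begin

definition "kk = 2 / (b * (r1 - r2))"
definition "uu x = (x - r1) / (x - r2) * ((1 - r2) / (1 - r1))"
definition "ww x = (r1 - x) / (x - r2) * (- r2 / r1)"
definition "f1 x = 2 / b * (uu x powr (kk - 1)) * (1 / (x - r2)\<^sup>2) * ((1 - r2) / (1 - r1))"
definition "f2 x = 2 / b * (ww x powr (kk - 1)) * (1 / (x - r2)\<^sup>2) * (- r2 / r1)"

lemma kk_pos: "kk > 0" using b r12 by (simp add: kk_def)
lemma kk_r: "kk * (r1 - r2) = 2 / b" using b r12 by (simp add: kk_def field_simps)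
lemma nz: "1 - r1 \<noteq> 0" "r1 \<noteq> 0" "r2 \<noteq> 0" "r1 - r2 \<noteq> 0" "b \<noteq> 0"
  using r1_lt1 r1_pos r2_neg b by auto
lemma alg1: "k * P * (c * (r / D)) = (k * r) * P * (1 / D) * c" for k P c r D :: real
  by (simp add: divide_inverse ac_simps)
lemma alg2: "k * P * (c * (- r / D)) = - ((k * r) * P * (1 / D) * c)" for k P c r D :: real
  by (simp add: divide_inverse ac_simps)

lemma uu_pos: "r1 < x \<Longrightarrow> uu x > 0"
  using r12 r1_lt1 unfolding uu_def by (intro mult_pos_pos divide_pos_pos) auto
lemma ww_pos: "x < r1 \<Longrightarrow> r2 < x \<Longrightarrow> ww x > 0"
  using r12 r1_pos r2_neg unfolding ww_def by (intro mult_pos_pos divide_pos_pos) auto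

lemma quot_deriv: "x \<noteq> r2 \<Longrightarrow> ((\<lambda>x. (x - a) / (x - r2)) has_real_derivative (a - r2) / (x - r2)\<^sup>2) (at x)"
proof -
  assume x: "x \<noteq> r2"
  have "((\<lambda>x. (x - a) / (x - r2)) has_real_derivative (1 * (x - r2) - (x - a) * 1) / ((x - r2) * (x - r2))) (at x)"
    using x by (auto intro!: derivative_eq_intros)
  moreover have "(1 * (x - r2) - (x - a) * 1) / ((x - r2) * (x - r2)) = (a - r2) / (x - r2)\<^sup>2"
    by (simp add: power2_eq_square)
  ultimately show ?thesis by (simp add: power2_eq_square)
qed

lemma uu_deriv: "r1 < x \<Longrightarrow> (uu has_real_derivative ((1 - r2) / (1 - r1)) * ((r1 - r2) / (x - r2)\<^sup>2)) (at x)"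
proof -
  assume "r1 < x"
  then have "x \<noteq> r2" using r12 by simp
  from DERIV_cmult[OF quot_deriv[OF this, of r1], of "(1 - r2) / (1 - r1)"]
  show ?thesis unfolding uu_def by (simp add: ac_simps)
qed

lemma ww_deriv: "r2 < x \<Longrightarrow> (ww has_real_derivative (r2 / r1) * ((r1 - r2) / (x - r2)\<^sup>2)) (at x)"
proof -
  assume "r2 < x"
  then have "x \<noteq> r2" using r12 by simp
  from DERIV_cmult[OF quot_deriv[OF this, of r1], of "r2 / r1"]
  have "((\<lambda>x. r2 / r1 * ((x - r1) / (x - r2))) has_real_derivative r2 / r1 * ((r1 - r2) / (x - r2)\<^sup>2)) (at x)" .
  moreover have "(\<lambda>x. r2 / r1 * ((x - r1) / (x - r2))) = ww"
    by (rule ext) (simp add: ww_def divide_inverse algebra_simps)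
  ultimately show ?thesis by simp
qed

lemma H1_deriv:
  assumes "r1 < x"
  shows "((\<lambda>x. - (uu x powr kk)) has_real_derivative - f1 x) (at x)"
proof -
  have "((\<lambda>x. uu x powr kk) has_real_derivative kk * uu x powr (kk - 1) * (((1 - r2) / (1 - r1)) * ((r1 - r2) / (x - r2)\<^sup>2))) (at x)"
    using uu_deriv[OF assms] uu_pos[OF assms] by (auto intro!: derivative_eq_intros)
  moreover have "kk * uu x powr (kk - 1) * (((1 - r2) / (1 - r1)) * ((r1 - r2) / (x - r2)\<^sup>2)) = f1 x"
    unfolding alg1 kk_r f1_def by simp
  ultimately have "((\<lambda>x. uu x powr kk) has_real_derivative f1 x) (at x)" by simp
  from DERIV_minus[OF this] show ?thesis .
qed

lemma H2_deriv:
  assumes "r2 < x" "x < r1"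
  shows "((\<lambda>x. ww x powr kk) has_real_derivative - f2 x) (at x)"
proof -
  have "((\<lambda>x. ww x powr kk) has_real_derivative kk * ww x powr (kk - 1) * ((r2 / r1) * ((r1 - r2) / (x - r2)\<^sup>2))) (at x)"
    using ww_deriv[OF assms(1)] ww_pos[OF assms(2,1)] by (auto intro!: derivative_eq_intros)
  moreover have "kk * ww x powr (kk - 1) * ((r2 / r1) * ((r1 - r2) / (x - r2)\<^sup>2)) = - f2 x"
    unfolding alg1 kk_r f2_def by simp
  ultimately show ?thesis by simp
qed

lemma f1_nonneg: "0 \<le> f1 x"
  unfolding f1_def using b r12 r1_lt1 by (intro mult_nonneg_nonneg) auto
lemma f2_nonneg: "0 \<le> f2 x"
proof -
  have "0 < - r2 / r1" using r1_pos r2_neg by (intro divide_pos_pos) auto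
  then show ?thesis unfolding f2_def using b by (intro mult_nonneg_nonneg) auto
qed

lemma f1_cont: "r1 < x \<Longrightarrow> isCont f1 x"
  unfolding f1_def uu_def using r12 r1_lt1 uu_pos[of x, unfolded uu_def] nz
  by (auto intro!: continuous_intros)
lemma f2_cont: "r2 < x \<Longrightarrow> x < r1 \<Longrightarrow> isCont f2 x"
  unfolding f2_def ww_def using r12 r1_pos ww_pos[of x, unfolded ww_def] nz
  by (auto intro!: continuous_intros)

lemma alg3: "D \<noteq> 0 \<Longrightarrow> E \<noteq> 0 \<Longrightarrow>
  - (b / 2) * (X * D) * (2 / b * P * (1 / D\<^sup>2) * (N / E)) = - (P * (X / D * (N / E)))" for D E X P N :: real
  using nz
  by (simp add: field_simps power2_eq_square)

lemma H1_v: "r1 < x \<Longrightarrow> - (uu x powr kk) = v x * f1 x"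
proof -
  assume x: "r1 < x"
  define P where "P = uu x powr (kk - 1)"
  have "uu x powr kk = uu x powr (kk - 1) * uu x powr 1" by (subst powr_add[symmetric]) simp
  then have e: "uu x powr kk = P * uu x" using uu_pos[OF x] unfolding P_def by simp
  have "x - r2 \<noteq> 0" using x r12 by simp
  have "v x * f1 x = - (b / 2) * ((x - r1) * (x - r2)) * (2 / b * P * (1 / (x - r2)\<^sup>2) * ((1 - r2) / (1 - r1)))"
    unfolding v_fact f1_def P_def ..
  also have "\<dots> = - (P * uu x)" unfolding uu_def using nz \<open>x - r2 \<noteq> 0\<close>
    by (intro alg3) auto
  finally show ?thesis using e by simp
qed

lemma H2_v: "r2 < x \<Longrightarrow> x < r1 \<Longrightarrow> ww x powr kk = v x * f2 x"
proof -
  assume x: "r2 < x" "x < r1"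
  define P where "P = ww x powr (kk - 1)"
  have "ww x powr kk = ww x powr (kk - 1) * ww x powr 1" by (subst powr_add[symmetric]) simp
  then have e: "ww x powr kk = P * ww x" using ww_pos[OF x(2,1)] unfolding P_def by simp
  have "x - r2 \<noteq> 0" using x r12 by simp
  have "v x * f2 x = - (b / 2) * ((x - r1) * (x - r2)) * (2 / b * P * (1 / (x - r2)\<^sup>2) * (- r2 / r1))"
    unfolding v_fact f2_def P_def ..
  also have "\<dots> = - (P * ((x - r1) / (x - r2) * (- r2 / r1)))" using nz \<open>x - r2 \<noteq> 0\<close>
    by (intro alg3) auto
  also have "\<dots> = P * ww x" unfolding ww_def by (simp add: divide_inverse algebra_simps)
  finally show ?thesis using e by simp
qed

lemma uu_cont: "r2 < x \<Longrightarrow> isCont uu x"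
  unfolding uu_def using nz by (auto intro!: continuous_intros)
lemma ww_cont: "r2 < x \<Longrightarrow> isCont ww x"
  unfolding ww_def using nz by (auto intro!: continuous_intros)

lemma H1_lim_r1: "((\<lambda>x. - (uu x powr kk)) \<longlongrightarrow> 0) (at_right r1)"
proof -
  have "(uu \<longlongrightarrow> uu r1) (at_right r1)"
    using uu_cont[of r1] r12 by (simp add: isCont_def filterlim_at_split)
  then have u0: "(uu \<longlongrightarrow> 0) (at_right r1)" by (simp add: uu_def)
  have "\<forall>\<^sub>F x in at_right r1. 0 \<le> uu x"
    using uu_pos by (auto simp: eventually_at_right_less intro: eventually_mono[OF eventually_at_right_less] less_imp_le)
  then have "((\<lambda>x. uu x powr kk) \<longlongrightarrow> 0) (at_right r1)"
    using tendsto_zero_powrI[OF u0 tendsto_const _ kk_pos] by simp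
  then show ?thesis using tendsto_minus by fastforce
qed

lemma H1_lim_1: "((\<lambda>x. - (uu x powr kk)) \<longlongrightarrow> -1) (at_left 1)"
proof -
  have "isCont (\<lambda>x. - (uu x powr kk)) 1"
    using uu_cont[of 1] uu_pos[of 1] r12 r1_lt1 by (auto intro!: continuous_intros)
  moreover have "uu 1 = 1" unfolding uu_def using r1_lt1 r12 by simp
  ultimately show ?thesis by (simp add: isCont_def filterlim_at_split)
qed

lemma H2_lim_0: "((\<lambda>x. ww x powr kk) \<longlongrightarrow> 1) (at_right 0)"
proof -
  have "isCont (\<lambda>x. ww x powr kk) 0"
    using ww_cont[of 0] ww_pos[of 0] r2_neg r1_pos by (auto intro!: continuous_intros)
  moreover have "ww 0 = 1" unfolding ww_def using r1_pos r2_neg by simp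
  ultimately show ?thesis by (simp add: isCont_def filterlim_at_split)
qed

lemma H2_lim_r1: "((\<lambda>x. ww x powr kk) \<longlongrightarrow> 0) (at_left r1)"
proof -
  have "(ww \<longlongrightarrow> ww r1) (at_left r1)"
    using ww_cont[of r1] r12 by (simp add: isCont_def filterlim_at_split)
  then have u0: "(ww \<longlongrightarrow> 0) (at_left r1)" by (simp add: ww_def)
  have "\<forall>\<^sub>F x in at_left r1. r2 < x"
    using eventually_at_left_real[OF r12] by (rule eventually_mono) auto
  then have "\<forall>\<^sub>F x in at_left r1. 0 \<le> ww x"
    using eventually_at_left_real[OF r12]
    by eventually_elim (auto intro: less_imp_le ww_pos)
  then show ?thesis
    using tendsto_zero_powrI[OF u0 tendsto_const _ kk_pos] by simp
qed

end

context fv begin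

definition "Y1 = (1 - r1) / (1 - r2)"
definition "Y0 = r1 / r2"

lemma Y1_pos: "0 < Y1" and Y1_lt1: "Y1 < 1" and Y0_neg: "Y0 < 0"
  using r1_lt1 r12 r1_pos r2_neg by (auto simp: Y1_def Y0_def divide_pos_pos divide_pos_neg)

lemma one_minus_Y1: "1 - Y1 = (r1 - r2) / (1 - r2)"
  using r12 r1_lt1 by (simp add: Y1_def field_simps)
lemma one_minus_Y0: "1 - Y0 = (r1 - r2) / (- r2)"
  using r2_neg by (simp add: Y0_def field_simps)

lemma sol_alt: "qf C t \<noteq> 1 \<Longrightarrow> sol C t = r2 + (r1 - r2) / (1 - qf C t)"
  unfolding sol_def by (simp add: field_simps)

lemma exp_le1: "t \<ge> 0 \<Longrightarrow> exp (- b * (r1 - r2) * t / 2) \<le> 1"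
  using b r12 by (simp add: mult_nonneg_nonneg)
lemma exp_lt1: "t > 0 \<Longrightarrow> exp (- b * (r1 - r2) * t / 2) < 1"
  using b r12 by (simp add: mult_pos_pos)

lemma qf1_bounds: "t \<ge> 0 \<Longrightarrow> 0 < qf Y1 t \<and> qf Y1 t \<le> Y1"
  using exp_le1 Y1_pos unfolding qf_def by (simp add: mult_left_le)
lemma qf1_lt: "t > 0 \<Longrightarrow> qf Y1 t < Y1"
  using exp_lt1 Y1_pos unfolding qf_def by simp
lemma qf0_bounds: "t \<ge> 0 \<Longrightarrow> qf Y0 t < 0 \<and> Y0 \<le> qf Y0 t"
  using exp_le1 Y0_neg unfolding qf_def by (simp add: mult_neg_pos mult_left_le_one_le)
lemma qf0_gt: "t > 0 \<Longrightarrow> Y0 < qf Y0 t"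
  using exp_lt1 Y0_neg unfolding qf_def by simp

lemma mu_range: assumes "t \<ge> 0" shows "r1 < sol Y1 t" "sol Y1 t \<le> 1"
proof -
  have q: "0 < qf Y1 t" "qf Y1 t \<le> Y1" using qf1_bounds[OF assms] by auto
  have ne: "qf Y1 t \<noteq> 1" using q Y1_lt1 by simp
  have "1 - qf Y1 t < 1" "0 < 1 - Y1" "1 - Y1 \<le> 1 - qf Y1 t" using q Y1_lt1 by auto
  then have "(r1 - r2) / 1 < (r1 - r2) / (1 - qf Y1 t)" "(r1 - r2) / (1 - qf Y1 t) \<le> (r1 - r2) / (1 - Y1)"
    using r12 q by (rule_tac divide_strict_left_mono; auto) (rule_tac divide_left_mono; use r12 q Y1_lt1 in auto)
  moreover have "(r1 - r2) / (1 - Y1) = 1 - r2" unfolding one_minus_Y1 using r12 r1_lt1 nz by simp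
  ultimately show "r1 < sol Y1 t" "sol Y1 t \<le> 1" unfolding sol_alt[OF ne] by auto
qed

lemma mu_range_strict: assumes "t > 0" shows "sol Y1 t < 1"
proof -
  have q: "0 < qf Y1 t" "qf Y1 t < Y1" using qf1_bounds[of t] qf1_lt[OF assms] assms by auto
  have ne: "qf Y1 t \<noteq> 1" using q Y1_lt1 by simp
  have "0 < 1 - Y1" "1 - Y1 < 1 - qf Y1 t" using q Y1_lt1 by auto
  then have "(r1 - r2) / (1 - qf Y1 t) < (r1 - r2) / (1 - Y1)"
    using r12 by (auto intro!: divide_strict_left_mono mult_pos_pos)
  moreover have "(r1 - r2) / (1 - Y1) = 1 - r2" unfolding one_minus_Y1 using r12 r1_lt1 nz by simp
  ultimately show ?thesis unfolding sol_alt[OF ne] by auto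
qed

lemma nu_range: assumes "t \<ge> 0" shows "sol Y0 t < r1" "0 \<le> sol Y0 t"
proof -
  have q: "qf Y0 t < 0" "Y0 \<le> qf Y0 t" using qf0_bounds[OF assms] by auto
  have ne: "qf Y0 t \<noteq> 1" using q by simp
  have "1 < 1 - qf Y0 t" "1 - qf Y0 t \<le> 1 - Y0" using q by auto
  then have "(r1 - r2) / (1 - qf Y0 t) < (r1 - r2) / 1" "(r1 - r2) / (1 - Y0) \<le> (r1 - r2) / (1 - qf Y0 t)"
    using r12 q by (rule_tac divide_strict_left_mono; auto) (rule_tac divide_left_mono; use r12 q Y0_neg in auto)
  moreover have "(r1 - r2) / (1 - Y0) = - r2" unfolding one_minus_Y0 using r12 nz by simp
  ultimately show "sol Y0 t < r1" "0 \<le> sol Y0 t" unfolding sol_alt[OF ne] by auto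
qed

lemma nu_range_strict: assumes "t > 0" shows "0 < sol Y0 t"
proof -
  have q: "qf Y0 t < 0" "Y0 < qf Y0 t" using qf0_bounds[of t] qf0_gt[OF assms] assms by auto
  have ne: "qf Y0 t \<noteq> 1" using q by simp
  have "1 < 1 - qf Y0 t" "1 - qf Y0 t < 1 - Y0" using q by auto
  then have "(r1 - r2) / (1 - Y0) < (r1 - r2) / (1 - qf Y0 t)"
    using r12 by (auto intro!: divide_strict_left_mono mult_pos_pos)
  moreover have "(r1 - r2) / (1 - Y0) = - r2" unfolding one_minus_Y0 using r12 nz by simp
  ultimately show ?thesis unfolding sol_alt[OF ne] by auto
qed

lemma qf_ne1: "t \<ge> 0 \<Longrightarrow> qf Y1 t \<noteq> 1" "t \<ge> 0 \<Longrightarrow> qf Y0 t \<noteq> 1"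
  using qf1_bounds[of t] qf0_bounds[of t] Y1_lt1 by auto

lemma mu_formula_eq: "mu_formula t1 t2 b = sol Y1"
  by (rule ext) (simp add: mu_formula_def sol_def qf_def Y1_def Let_def)
lemma nu_formula_eq: "nu_formula t1 t2 b = sol Y0"
  by (rule ext) (simp add: nu_formula_def sol_def qf_def Y0_def Let_def)

lemma sol_Y1_0: "sol Y1 0 = 1"
  using sol_alt[OF qf_ne1(1)[of 0]] one_minus_Y1 nz r12 r1_lt1 by (simp add: qf_def)
lemma sol_Y0_0: "sol Y0 0 = 0"
  using sol_alt[OF qf_ne1(2)[of 0]] one_minus_Y0 nz r12 by (simp add: qf_def)

lemma sol_deriv_within: "t \<ge> 0 \<Longrightarrow> C = Y1 \<or> C = Y0 \<Longrightarrow>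
    (sol C has_real_derivative v (sol C t)) (at t within {0..})"
proof -
  assume "t \<ge> 0" "C = Y1 \<or> C = Y0"
  then have "qf C t \<noteq> 1" using qf_ne1 by blast
  from has_field_derivative_at_within[OF sol_deriv[OF this]] show ?thesis .
qed

lemma yy_sol: "qf C t \<noteq> 1 \<Longrightarrow> (sol C t - r1) / (sol C t - r2) = qf C t"
proof -
  assume ne: "qf C t \<noteq> 1"
  then have d: "1 - qf C t \<noteq> 0" by simp
  have e1: "sol C t - r1 = (r1 - r2) * qf C t / (1 - qf C t)"
    and e2: "sol C t - r2 = (r1 - r2) / (1 - qf C t)"
    unfolding sol_def using d by (simp_all add: field_simps)
  have gen: "dd \<noteq> 0 \<Longrightarrow> e \<noteq> 0 \<Longrightarrow> (e * q / dd) / (e / dd) = q" for dd e q :: real by simp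
  show ?thesis unfolding e1 e2 using gen d nz by simp
qed

lemma cc_kk: "b * (r1 - r2) / 2 * kk = 1" using nz unfolding kk_def by simp

lemma exp_powr_kk: "exp (- b * (r1 - r2) * t / 2) powr kk = exp (- t)"
proof -
  have "exp (- b * (r1 - r2) * t / 2) powr kk = exp (kk * (- b * (r1 - r2) * t / 2))"
    by (simp add: powr_def)
  also have "kk * (- b * (r1 - r2) * t / 2) = - t * (b * (r1 - r2) / 2 * kk)" by (simp add: algebra_simps)
  also have "\<dots> = - t" unfolding cc_kk by simp
  finally show ?thesis .
qed

lemma uu_sol: assumes "t \<ge> 0" shows "uu (sol Y1 t) powr kk = exp (- t)"
proof -
  have "uu (sol Y1 t) = qf Y1 t * ((1 - r2) / (1 - r1))" unfolding uu_def yy_sol[OF qf_ne1(1)[OF assms]] ..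
  also have "(1 - r2) / (1 - r1) = 1 / Y1" unfolding Y1_def by simp
  also have "qf Y1 t * (1 / Y1) = exp (- b * (r1 - r2) * t / 2)" using Y1_pos by (simp add: qf_def)
  finally show ?thesis using exp_powr_kk by simp
qed

lemma ww_sol: assumes "t \<ge> 0" shows "ww (sol Y0 t) powr kk = exp (- t)"
proof -
  have "ww (sol Y0 t) = ((sol Y0 t - r1) / (sol Y0 t - r2)) * (r2 / r1)" unfolding ww_def
    by (simp add: divide_inverse algebra_simps)
  also have "\<dots> = qf Y0 t * (r2 / r1)" unfolding yy_sol[OF qf_ne1(2)[OF assms]] ..
  also have "r2 / r1 = 1 / Y0" unfolding Y0_def by simp
  also have "qf Y0 t * (1 / Y0) = exp (- b * (r1 - r2) * t / 2)" using Y0_neg by (simp add: qf_def)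
  finally show ?thesis using exp_powr_kk by simp
qed

end

lemma set_integrable_cont_mult:
  fixes f h :: "real \<Rightarrow> real" and a bb :: real
  assumes fi: "set_integrable lborel {a<..<bb} f" and cf: "continuous_on {a<..<bb} f"
    and ch: "continuous_on {0..1} h" and ab: "0 \<le> a" "bb \<le> 1"
  shows "set_integrable lborel {a<..<bb} (\<lambda>x. h x * f x)"
proof -
  obtain C where C: "\<And>x. x \<in> {0..1} \<Longrightarrow> \<bar>h x\<bar> \<le> C"
  proof -
    have "continuous_on {0..1} (\<lambda>x. \<bar>h x\<bar>)" using ch by (intro continuous_intros)
    from continuous_attains_sup[OF compact_Icc _ this] obtain x0 where
      "x0 \<in> {0..1::real}" "\<forall>y\<in>{0..1}. \<bar>h y\<bar> \<le> \<bar>h x0\<bar>" by auto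
    then show ?thesis using that by blast
  qed
  have sub: "{a<..<bb} \<subseteq> {0..1}" using ab by auto
  have chf: "continuous_on {a<..<bb} (\<lambda>x. h x * f x)"
    using continuous_on_subset[OF ch sub] cf by (intro continuous_intros)
  show ?thesis unfolding set_integrable_def
  proof (rule Bochner_Integration.integrable_bound[where f="\<lambda>x. indicator {a<..<bb} x *\<^sub>R (C * \<bar>f x\<bar>)"])
    show "integrable lborel (\<lambda>x. indicator {a<..<bb} x *\<^sub>R (C * \<bar>f x\<bar>))"
    proof -
      have "integrable lborel (\<lambda>x. norm (indicator {a<..<bb} x *\<^sub>R f x))"
        using fi unfolding set_integrable_def by (rule integrable_norm)
      then have "integrable lborel (\<lambda>x. C * norm (indicator {a<..<bb} x *\<^sub>R f x))"
        by (rule integrable_mult_right)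
      then show ?thesis by (simp add: abs_mult ac_simps)
    qed
    show "(\<lambda>x. indicator {a<..<bb} x *\<^sub>R (h x * f x)) \<in> borel_measurable lborel"
      using borel_measurable_continuous_on_indicator[OF _ chf] by simp
    show "AE x in lborel. norm (indicator {a<..<bb} x *\<^sub>R (h x * f x))
        \<le> norm (indicator {a<..<bb} x *\<^sub>R (C * \<bar>f x\<bar>))"
    proof (rule AE_I2)
      fix x show "norm (indicator {a<..<bb} x *\<^sub>R (h x * f x))
        \<le> norm (indicator {a<..<bb} x *\<^sub>R (C * \<bar>f x\<bar>))"
      proof (cases "x \<in> {a<..<bb}")
        case True
        then have "\<bar>h x\<bar> \<le> C" using C sub by auto
        then show ?thesis using True by (simp add: abs_mult mult_right_mono)
      qed simp
    qed
  qed
qed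

context fv begin

lemma v_cont: "continuous_on A v"
  unfolding drift_def by (intro continuous_intros) auto

lemma f1_facts:
  shows "set_integrable lborel {r1<..<1} f1" "(LBINT x=ereal r1..ereal 1. f1 x) = 1"
    "continuous_on {r1<..<1} f1"
proof -
  have g0: "\<forall>x\<in>{0..1}. ((\<lambda>x. 0::real) has_real_derivative 0) (at x within {0..1})" by simp
  note I = ibp_gen[of r1 1 "\<lambda>x. - (uu x powr kk)" f1 v 0 "-1" "\<lambda>x. 0" "\<lambda>x. 0",
      OF r1_lt1 less_imp_le[OF r1_pos] order_refl H1_deriv f1_cont f1_nonneg H1_v H1_lim_r1 H1_lim_1 g0 continuous_on_const v_cont]
  show "set_integrable lborel {r1<..<1} f1" using I(1) by simp
  show "(LBINT x=ereal r1..ereal 1. f1 x) = 1" using I(2) by simp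
  show "continuous_on {r1<..<1} f1" using f1_cont by (intro continuous_at_imp_continuous_on) auto
qed

lemma f2_facts:
  shows "set_integrable lborel {0<..<r1} f2" "(LBINT x=ereal 0..ereal r1. f2 x) = 1"
    "continuous_on {0<..<r1} f2"
proof -
  have g0: "\<forall>x\<in>{0..1}. ((\<lambda>x. 0::real) has_real_derivative 0) (at x within {0..1})" by simp
  have x: "\<And>x. 0 < x \<Longrightarrow> r2 < x" using r2_neg by linarith
  note I = ibp_gen[of 0 r1 "\<lambda>x. ww x powr kk" f2 v 1 0 "\<lambda>x. 0" "\<lambda>x. 0",
      OF r1_pos order_refl less_imp_le[OF r1_lt1] H2_deriv[OF x] f2_cont[OF x] f2_nonneg H2_v[OF x] H2_lim_0 H2_lim_r1 g0 continuous_on_const v_cont]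
  show "set_integrable lborel {0<..<r1} f2" using I(1) by simp
  show "(LBINT x=ereal 0..ereal r1. f2 x) = 1" using I(2) by simp
  show "continuous_on {0<..<r1} f2" using f2_cont x by (intro continuous_at_imp_continuous_on) auto
qed

lemma f1_ibp:
  assumes gd: "\<forall>x\<in>{0..1}. (g has_real_derivative g' x) (at x within {0..1})"
    and g'c: "continuous_on {0..1} g'"
  shows "set_integrable lborel {r1<..<1} (\<lambda>x. (v x * g' x - g x) * f1 x)"
    "(LBINT x=ereal r1..ereal 1. (v x * g' x - g x) * f1 x) = - g 1"
proof -
  note I = ibp_gen[of r1 1 "\<lambda>x. - (uu x powr kk)" f1 v 0 "-1" g g',
      OF r1_lt1 less_imp_le[OF r1_pos] order_refl H1_deriv f1_cont f1_nonneg H1_v H1_lim_r1 H1_lim_1 gd g'c v_cont]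
  show "set_integrable lborel {r1<..<1} (\<lambda>x. (v x * g' x - g x) * f1 x)" using I(3) by simp
  show "(LBINT x=ereal r1..ereal 1. (v x * g' x - g x) * f1 x) = - g 1" using I(4) by simp
qed

lemma f2_ibp:
  assumes gd: "\<forall>x\<in>{0..1}. (g has_real_derivative g' x) (at x within {0..1})"
    and g'c: "continuous_on {0..1} g'"
  shows "set_integrable lborel {0<..<r1} (\<lambda>x. (v x * g' x - g x) * f2 x)"
    "(LBINT x=ereal 0..ereal r1. (v x * g' x - g x) * f2 x) = - g 0"
proof -
  have x: "\<And>x. 0 < x \<Longrightarrow> r2 < x" using r2_neg by linarith
  note I = ibp_gen[of 0 r1 "\<lambda>x. ww x powr kk" f2 v 1 0 g g',
      OF r1_pos order_refl less_imp_le[OF r1_lt1] H2_deriv[OF x] f2_cont[OF x] f2_nonneg H2_v[OF x] H2_lim_0 H2_lim_r1 gd g'c v_cont]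
  show "set_integrable lborel {0<..<r1} (\<lambda>x. (v x * g' x - g x) * f2 x)" using I(3) by simp
  show "(LBINT x=ereal 0..ereal r1. (v x * g' x - g x) * f2 x) = - g 0" using I(4) by simp
qed

end

lemma set_integrable_bound_mult:
  fixes f h :: "real \<Rightarrow> real"
  assumes fi: "set_integrable lborel S f" and S: "S \<in> sets borel"
    and chf: "continuous_on S (\<lambda>x. h x * f x)" and C: "\<And>x. x \<in> S \<Longrightarrow> \<bar>h x\<bar> \<le> C"
  shows "set_integrable lborel S (\<lambda>x. h x * f x)"
  unfolding set_integrable_def
proof (rule Bochner_Integration.integrable_bound[where f="\<lambda>x. indicator S x *\<^sub>R (C * \<bar>f x\<bar>)"])
  show "integrable lborel (\<lambda>x. indicator S x *\<^sub>R (C * \<bar>f x\<bar>))"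
  proof -
    have "integrable lborel (\<lambda>x. norm (indicator S x *\<^sub>R f x))"
      using fi unfolding set_integrable_def by (rule integrable_norm)
    then have "integrable lborel (\<lambda>x. C * norm (indicator S x *\<^sub>R f x))"
      by (rule integrable_mult_right)
    then show ?thesis by (simp add: abs_mult ac_simps)
  qed
  show "(\<lambda>x. indicator S x *\<^sub>R (h x * f x)) \<in> borel_measurable lborel"
    using borel_measurable_continuous_on_indicator[OF S chf] by simp
  show "AE x in lborel. norm (indicator S x *\<^sub>R (h x * f x))
      \<le> norm (indicator S x *\<^sub>R (C * \<bar>f x\<bar>))"
  proof (rule AE_I2)
    fix x show "norm (indicator S x *\<^sub>R (h x * f x)) \<le> norm (indicator S x *\<^sub>R (C * \<bar>f x\<bar>))"
    proof (cases "x \<in> S")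
      case True
      then have "\<bar>h x\<bar> \<le> C" using C by auto
      then show ?thesis using True by (simp add: abs_mult mult_right_mono)
    qed simp
  qed
qed

lemma exp_integrable: "set_integrable lborel {0<..} (\<lambda>t. exp (- t) :: real)"
proof -
  have F: "DERIV (\<lambda>t. - exp (- t)) x :> exp (- x)" for x :: real
    by (auto intro!: derivative_eq_intros)
  have A: "(((\<lambda>t. - exp (- t)) \<circ> real_of_ereal) \<longlongrightarrow> -1) (at_right (ereal 0))"
    unfolding ereal_tendsto_simps1
  proof -
    have "((\<lambda>t. - exp (- t)) \<longlongrightarrow> - exp (- 0)) (at_right (0::real))"
      by (intro tendsto_intros)
    then show "((\<lambda>t. - exp (- t)) \<longlongrightarrow> - 1) (at_right (0::real))" by simp
  qed
  have B: "(((\<lambda>t. - exp (- t :: real)) \<circ> real_of_ereal) \<longlongrightarrow> 0) (at_left \<infinity>)"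
    unfolding ereal_tendsto_simps1
  proof -
    have "((\<lambda>t. exp (- t :: real)) \<longlongrightarrow> 0) at_top"
      using filterlim_compose[OF exp_at_bot filterlim_uminus_at_bot_at_top] by (simp add: o_def)
    then show "((\<lambda>t. - exp (- t :: real)) \<longlongrightarrow> 0) at_top" using tendsto_minus by fastforce
  qed
  have "set_integrable lborel (einterval (ereal 0) \<infinity>) (\<lambda>t. exp (- t) :: real)"
    by (rule interval_integral_FTC_nonneg(1)[OF _ F _ _ A B]) auto
  then show ?thesis by simp
qed

context fv begin

lemma sol_isCont: "t \<ge> 0 \<Longrightarrow> C = Y1 \<or> C = Y0 \<Longrightarrow> isCont (sol C) t"
proof -
  assume "t \<ge> 0" "C = Y1 \<or> C = Y0"
  then have "qf C t \<noteq> 1" using qf_ne1 by blast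
  from DERIV_isCont[OF sol_deriv[OF this]] show ?thesis .
qed

lemma sol_lim_top: "(sol C \<longlongrightarrow> r1) at_top"
proof -
  have "LIM t at_top. b * (r1 - r2) / 2 * t :> at_top"
    using b r12 by (intro filterlim_tendsto_pos_mult_at_top[OF tendsto_const] filterlim_ident) auto
  then have "LIM t at_top. - (b * (r1 - r2) / 2 * t) :> at_bot"
    by (simp add: filterlim_uminus_at_top[symmetric])
  from filterlim_compose[OF exp_at_bot this]
  have e: "((\<lambda>t. exp (- (b * (r1 - r2) / 2 * t))) \<longlongrightarrow> 0) at_top" .
  have qe: "qf C = (\<lambda>t. C * exp (- (b * (r1 - r2) / 2 * t)))" by (rule ext) (simp add: qf_def field_simps)
  have "(qf C \<longlongrightarrow> C * 0) at_top" unfolding qe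
    using tendsto_mult[OF tendsto_const e] .
  then have q: "(qf C \<longlongrightarrow> 0) at_top" by simp
  have "((\<lambda>t. r1 + (r1 - r2) * (qf C t / (1 - qf C t))) \<longlongrightarrow> r1 + (r1 - r2) * (0 / (1 - 0))) at_top"
    by (intro tendsto_intros q) auto
  then show ?thesis unfolding sol_def[abs_def] by simp
qed

lemma v_isCont: "isCont v x"
  using v_cont[of UNIV] by (simp add: continuous_on_eq_continuous_at)

lemma sol_cont_on: "C = Y1 \<or> C = Y0 \<Longrightarrow> continuous_on {0..} (sol C)"
  using sol_isCont by (intro continuous_at_imp_continuous_on) auto

lemma sub0: "{0<..} \<subseteq> {0::real..}" by (simp add: subset_eq)

lemma Pbar_int_cong:
  assumes "C = Y1 \<or> C = Y0"
  shows "(LINT t:{0..}|lborel. exp (- t) * sol C t) = (LINT t:{0<..}|lborel. exp (- t) * sol C t)"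
proof (rule set_integral_cong_set)
  have c: "continuous_on {0..} (\<lambda>t. exp (- t) * sol C t)"
    using sol_cont_on[OF assms] by (intro continuous_intros)
  show "set_borel_measurable lborel {0..} (\<lambda>t. exp (- t) * sol C t)"
    unfolding set_borel_measurable_def using borel_measurable_continuous_on_indicator[OF _ c] by simp
  have c2: "continuous_on {0<..} (\<lambda>t. exp (- t) * sol C t)"
    using continuous_on_subset[OF c sub0] .
  show "set_borel_measurable lborel {0<..} (\<lambda>t. exp (- t) * sol C t)"
    unfolding set_borel_measurable_def using borel_measurable_continuous_on_indicator[OF _ c2] by simp
  show "AE x in lborel. (x \<in> {0<..}) = (x \<in> {0::real..})"
    using AE_lborel_singleton[of "0::real"] by eventually_elim (auto simp: less_le)
qed

lemma exp_sol_integrable: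
  assumes "C = Y1 \<or> C = Y0"
  shows "set_integrable lborel {0<..} (\<lambda>t. sol C t * exp (- t))"
proof (rule set_integrable_bound_mult[OF exp_integrable])
  show "continuous_on {0<..} (\<lambda>t. sol C t * exp (- t))"
    using continuous_on_subset[OF sol_cont_on[OF assms] sub0] by (intro continuous_intros)
  show "\<bar>sol C t\<bar> \<le> 1" if "t \<in> {0<..}" for t
    using assms mu_range[of t] nu_range[of t] that r1_lt1 by auto
qed auto

lemma Pbar_mu_eq: "(LINT t:{0..}|lborel. exp (- t) * sol Y1 t) = (LBINT x=ereal r1..ereal 1. x * f1 x)"
proof -
  define g where "g t = - sol Y1 t" for t
  define g' where "g' t = - v (sol Y1 t)" for t
  define fF where "fF z = - z * f1 (- z)" for z
  have key: "fF (g t) * g' t = sol Y1 t * exp (- t)" if "t \<ge> 0" for t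
  proof -
    have "fF (g t) * g' t = sol Y1 t * (- (v (sol Y1 t) * f1 (sol Y1 t)))"
      unfolding fF_def g_def g'_def by (simp add: algebra_simps)
    also have "- (v (sol Y1 t) * f1 (sol Y1 t)) = uu (sol Y1 t) powr kk"
      using H1_v[OF mu_range(1)[OF that]] by simp
    also have "\<dots> = exp (- t)" using uu_sol[OF that] .
    finally show ?thesis .
  qed
  have ab: "ereal 0 < \<infinity>" by simp
  have dg: "DERIV g x :> g' x" if "ereal 0 < ereal x" "ereal x < \<infinity>" for x
    unfolding g_def[abs_def] g'_def using that
    by (intro DERIV_minus sol_deriv qf_ne1) auto
  have cf: "isCont fF (g x)" if "ereal 0 < ereal x" "ereal x < \<infinity>" for x
  proof -
    have x: "x > 0" using that by simp
    have "isCont f1 (- g x)" unfolding g_def using f1_cont mu_range(1)[of x] x by simp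
    then have "isCont (\<lambda>z. f1 (- z)) (g x)" using isCont_o2[OF continuous_ident[THEN isCont_minus]] by auto
    then show ?thesis unfolding fF_def[abs_def] by (intro continuous_intros)
  qed
  have cg': "isCont g' x" if "ereal 0 < ereal x" "ereal x < \<infinity>" for x
  proof -
    have "isCont (sol Y1) x" using sol_isCont that by simp
    then show ?thesis unfolding g'_def[abs_def] using isCont_o2[OF _ v_isCont] by (intro isCont_minus) auto
  qed
  have fnn: "0 \<le> fF (g x)" if "ereal 0 < ereal x" "ereal x < \<infinity>" for x
    unfolding fF_def g_def using mu_range(1)[of x] that r1_pos f1_nonneg by simp
  have g'nn: "0 \<le> g' x" if "ereal 0 \<le> ereal x" "ereal x \<le> \<infinity>" for x
  proof -
    have "r1 < sol Y1 x" using mu_range(1)[of x] that by simp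
    then show ?thesis unfolding g'_def v_fact using b r12 by (simp add: mult_pos_pos)
  qed
  have A: "((ereal \<circ> g \<circ> real_of_ereal) \<longlongrightarrow> ereal (-1)) (at_right (ereal 0))"
  proof -
    have "isCont g 0" unfolding g_def[abs_def] using sol_isCont[of 0] by (intro isCont_minus) auto
    then have "(g \<longlongrightarrow> g 0) (at_right 0)" by (simp add: isCont_def filterlim_at_split)
    then have "(g \<longlongrightarrow> -1) (at_right 0)" unfolding g_def using sol_Y1_0 by simp
    then show ?thesis unfolding comp_assoc[symmetric] ereal_tendsto_simps1 ereal_tendsto_simps2 .
  qed
  have B: "((ereal \<circ> g \<circ> real_of_ereal) \<longlongrightarrow> ereal (- r1)) (at_left \<infinity>)"
  proof -
    have "(g \<longlongrightarrow> - r1) at_top" unfolding g_def[abs_def] by (intro tendsto_minus sol_lim_top)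
    then show ?thesis unfolding comp_assoc[symmetric] ereal_tendsto_simps1 ereal_tendsto_simps2 .
  qed
  have int: "set_integrable lborel (einterval (ereal 0) \<infinity>) (\<lambda>x. fF (g x) * g' x)"
  proof -
    have "set_integrable lborel {0<..} (\<lambda>x. fF (g x) * g' x) = set_integrable lborel {0<..} (\<lambda>t. sol Y1 t * exp (- t))"
      by (rule set_integrable_cong) (auto simp: key)
    then show ?thesis using exp_sol_integrable[of Y1] by simp
  qed
  note S = interval_integral_substitution_nonneg[OF ab dg cf cg' fnn g'nn A B int]
  have "(LBINT x=ereal r1..ereal 1. x * f1 x) = (LBINT x=ereal (-1)..ereal (- r1). fF x)"
    by (subst interval_integral_reflect) (simp add: fF_def)
  also have "\<dots> = (LBINT x=ereal 0..\<infinity>. fF (g x) * g' x)" using S(2) .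
  also have "\<dots> = (LBINT x=ereal 0..\<infinity>. exp (- x) * sol Y1 x)"
  proof (rule interval_integral_cong)
    fix x assume "x \<in> einterval (min (ereal 0) \<infinity>) (max (ereal 0) \<infinity>)"
    then have "x \<ge> 0" by simp
    have "fF (g x) * g' x = sol Y1 x * exp (- x)" by (rule key) fact
    then show "fF (g x) * g' x = exp (- x) * sol Y1 x" by (subst mult.commute)
  qed
  also have "\<dots> = (LINT t:{0<..}|lborel. exp (- t) * sol Y1 t)" by (rule interval_integral_to_infinity_eq)
  finally show ?thesis using Pbar_int_cong[of Y1] by simp
qed

lemma Pbar_nu_eq: "(LINT t:{0..}|lborel. exp (- t) * sol Y0 t) = (LBINT x=ereal 0..ereal r1. x * f2 x)"
proof -
  define g where "g t = sol Y0 t" for t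
  define g' where "g' t = v (sol Y0 t)" for t
  define fF where "fF z = z * f2 z" for z
  have key: "fF (g t) * g' t = sol Y0 t * exp (- t)" if "t \<ge> 0" for t
  proof -
    have r: "r2 < sol Y0 t" "sol Y0 t < r1" using nu_range[OF that] r2_neg by auto
    have "fF (g t) * g' t = sol Y0 t * (v (sol Y0 t) * f2 (sol Y0 t))"
      unfolding fF_def g_def g'_def by (simp add: algebra_simps)
    also have "v (sol Y0 t) * f2 (sol Y0 t) = ww (sol Y0 t) powr kk"
      using H2_v[OF r] by simp
    also have "\<dots> = exp (- t)" using ww_sol[OF that] .
    finally show ?thesis .
  qed
  have ab: "ereal 0 < \<infinity>" by simp
  have dg: "DERIV g x :> g' x" if "ereal 0 < ereal x" "ereal x < \<infinity>" for x
    unfolding g_def[abs_def] g'_def using that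
    by (intro sol_deriv qf_ne1) auto
  have cf: "isCont fF (g x)" if "ereal 0 < ereal x" "ereal x < \<infinity>" for x
  proof -
    have x: "x > 0" using that by simp
    have "isCont f2 (g x)" unfolding g_def using f2_cont nu_range[of x] x r2_neg by simp
    then show ?thesis unfolding fF_def[abs_def] by (intro continuous_intros)
  qed
  have cg': "isCont g' x" if "ereal 0 < ereal x" "ereal x < \<infinity>" for x
  proof -
    have "isCont (sol Y0) x" using sol_isCont that by simp
    then show ?thesis unfolding g'_def[abs_def] using isCont_o2[OF _ v_isCont] by auto
  qed
  have fnn: "0 \<le> fF (g x)" if "ereal 0 < ereal x" "ereal x < \<infinity>" for x
    unfolding fF_def g_def using nu_range(2)[of x] that f2_nonneg by simp
  have g'nn: "0 \<le> g' x" if "ereal 0 \<le> ereal x" "ereal x \<le> \<infinity>" for x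
  proof -
    have "sol Y0 x < r1" "r2 < sol Y0 x" using nu_range[of x] that r2_neg by auto
    then have "(sol Y0 x - r1) * (sol Y0 x - r2) < 0" by (simp add: mult_neg_pos)
    then have "0 \<le> - (b / 2) * ((sol Y0 x - r1) * (sol Y0 x - r2))" using b
      by (intro mult_nonpos_nonpos) auto
    then show ?thesis unfolding g'_def v_fact .
  qed
  have A: "((ereal \<circ> g \<circ> real_of_ereal) \<longlongrightarrow> ereal 0) (at_right (ereal 0))"
  proof -
    have "isCont g 0" unfolding g_def[abs_def] using sol_isCont[of 0] by auto
    then have "(g \<longlongrightarrow> g 0) (at_right 0)" by (simp add: isCont_def filterlim_at_split)
    then have "(g \<longlongrightarrow> 0) (at_right 0)" unfolding g_def using sol_Y0_0 by simp
    then show ?thesis unfolding comp_assoc[symmetric] ereal_tendsto_simps1 ereal_tendsto_simps2 .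
  qed
  have B: "((ereal \<circ> g \<circ> real_of_ereal) \<longlongrightarrow> ereal r1) (at_left \<infinity>)"
  proof -
    have "(g \<longlongrightarrow> r1) at_top" unfolding g_def[abs_def] by (rule sol_lim_top)
    then show ?thesis unfolding comp_assoc[symmetric] ereal_tendsto_simps1 ereal_tendsto_simps2 .
  qed
  have int: "set_integrable lborel (einterval (ereal 0) \<infinity>) (\<lambda>x. fF (g x) * g' x)"
  proof -
    have "set_integrable lborel {0<..} (\<lambda>x. fF (g x) * g' x) = set_integrable lborel {0<..} (\<lambda>t. sol Y0 t * exp (- t))"
      by (rule set_integrable_cong) (auto simp: key)
    then show ?thesis using exp_sol_integrable[of Y0] by simp
  qed
  note S = interval_integral_substitution_nonneg[OF ab dg cf cg' fnn g'nn A B int]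
  have "(LBINT x=ereal 0..ereal r1. x * f2 x) = (LBINT x=ereal 0..ereal r1. fF x)"
    by (simp add: fF_def)
  also have "\<dots> = (LBINT x=ereal 0..\<infinity>. fF (g x) * g' x)" using S(2) .
  also have "\<dots> = (LBINT x=ereal 0..\<infinity>. exp (- x) * sol Y0 x)"
  proof (rule interval_integral_cong)
    fix x assume "x \<in> einterval (min (ereal 0) \<infinity>) (max (ereal 0) \<infinity>)"
    then have "x \<ge> 0" by simp
    have "fF (g x) * g' x = sol Y0 x * exp (- x)" by (rule key) fact
    then show "fF (g x) * g' x = exp (- x) * sol Y0 x" by (subst mult.commute)
  qed
  also have "\<dots> = (LINT t:{0<..}|lborel. exp (- t) * sol Y0 t)" by (rule interval_integral_to_infinity_eq)
  finally show ?thesis using Pbar_int_cong[of Y0] by simp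
qed

end

context fv begin

lemma ival: "a \<le> bb \<Longrightarrow> (LBINT x=ereal a..ereal bb. F x) = (LINT x:{a<..<bb}|lborel. F x)"
  by (simp add: interval_integral_Ioo)

definition "A1 = (LINT x:{r1<..<1}|lborel. x * f1 x)"
definition "A2 = (LINT x:{0<..<r1}|lborel. x * f2 x)"

lemma f1_set: "set_integrable lborel {r1<..<1} f1" "(LINT x:{r1<..<1}|lborel. f1 x) = 1"
  using f1_facts(1,2) ival[of r1 1 f1] r1_lt1 by auto
lemma f2_set: "set_integrable lborel {0<..<r1} f2" "(LINT x:{0<..<r1}|lborel. f2 x) = 1"
  using f2_facts(1,2) ival[of 0 r1 f2] r1_pos by auto

lemma f1_hint: "continuous_on {0..1} h \<Longrightarrow> set_integrable lborel {r1<..<1} (\<lambda>x. h x * f1 x)"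
  using set_integrable_cont_mult[OF f1_set(1) f1_facts(3)] r1_pos r1_lt1 by auto
lemma f2_hint: "continuous_on {0..1} h \<Longrightarrow> set_integrable lborel {0<..<r1} (\<lambda>x. h x * f2 x)"
  using set_integrable_cont_mult[OF f2_set(1) f2_facts(3)] r1_pos r1_lt1 by auto

lemma gen_split: "gen t1 t2 b g g' x = (v x * g' x - g x) + (g 1 * x + g 0 * (1 - x))"
  unfolding gen_def by (simp add: algebra_simps)

lemma f1_gen:
  assumes gd: "\<forall>x\<in>{0..1}. (g has_real_derivative g' x) (at x within {0..1})"
    and g'c: "continuous_on {0..1} g'"
  shows "(LINT x:{r1<..<1}|lborel. gen t1 t2 b g g' x * f1 x) = - g 1 + g 1 * A1 + g 0 * (1 - A1)"
proof -
  have i1: "set_integrable lborel {r1<..<1} (\<lambda>x. (v x * g' x - g x) * f1 x)" by (rule f1_ibp(1)[OF gd g'c])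
  have e1: "(LINT x:{r1<..<1}|lborel. (v x * g' x - g x) * f1 x) = - g 1"
    using f1_ibp(2)[OF gd g'c] unfolding ival[OF less_imp_le[OF r1_lt1]] .
  have c: "continuous_on {0..1} (\<lambda>x. g 1 * x + g 0 * (1 - x))" by (intro continuous_intros)
  have i2: "set_integrable lborel {r1<..<1} (\<lambda>x. (g 1 * x + g 0 * (1 - x)) * f1 x)" by (rule f1_hint[OF c])
  have ix: "set_integrable lborel {r1<..<1} (\<lambda>x. x * f1 x)" by (rule f1_hint) (intro continuous_intros)
  have e2: "(LINT x:{r1<..<1}|lborel. (g 1 * x + g 0 * (1 - x)) * f1 x) = g 1 * A1 + g 0 * (1 - A1)"
  proof -
    have "(LINT x:{r1<..<1}|lborel. (g 1 * x + g 0 * (1 - x)) * f1 x)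
        = (LINT x:{r1<..<1}|lborel. g 1 * (x * f1 x) + g 0 * (f1 x - x * f1 x))"
      by (rule set_lebesgue_integral_cong) (auto simp: algebra_simps)
    also have "\<dots> = g 1 * A1 + g 0 * (1 - A1)"
      using ix f1_set by (simp add: A1_def set_integral_add set_integral_diff)
    finally show ?thesis .
  qed
  have "(LINT x:{r1<..<1}|lborel. gen t1 t2 b g g' x * f1 x)
      = (LINT x:{r1<..<1}|lborel. (v x * g' x - g x) * f1 x + (g 1 * x + g 0 * (1 - x)) * f1 x)"
    by (rule set_lebesgue_integral_cong) (auto simp: gen_split algebra_simps)
  also have "\<dots> = - g 1 + (g 1 * A1 + g 0 * (1 - A1))" using i1 i2 e1 e2 by (simp add: set_integral_add)
  finally show ?thesis by simp
qed

lemma f2_gen: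
  assumes gd: "\<forall>x\<in>{0..1}. (g has_real_derivative g' x) (at x within {0..1})"
    and g'c: "continuous_on {0..1} g'"
  shows "(LINT x:{0<..<r1}|lborel. gen t1 t2 b g g' x * f2 x) = - g 0 + g 1 * A2 + g 0 * (1 - A2)"
proof -
  have i1: "set_integrable lborel {0<..<r1} (\<lambda>x. (v x * g' x - g x) * f2 x)" by (rule f2_ibp(1)[OF gd g'c])
  have e1: "(LINT x:{0<..<r1}|lborel. (v x * g' x - g x) * f2 x) = - g 0"
    using f2_ibp(2)[OF gd g'c] unfolding ival[OF less_imp_le[OF r1_pos]] .
  have c: "continuous_on {0..1} (\<lambda>x. g 1 * x + g 0 * (1 - x))" by (intro continuous_intros)
  have i2: "set_integrable lborel {0<..<r1} (\<lambda>x. (g 1 * x + g 0 * (1 - x)) * f2 x)" by (rule f2_hint[OF c])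
  have ix: "set_integrable lborel {0<..<r1} (\<lambda>x. x * f2 x)" by (rule f2_hint) (intro continuous_intros)
  have e2: "(LINT x:{0<..<r1}|lborel. (g 1 * x + g 0 * (1 - x)) * f2 x) = g 1 * A2 + g 0 * (1 - A2)"
  proof -
    have "(LINT x:{0<..<r1}|lborel. (g 1 * x + g 0 * (1 - x)) * f2 x)
        = (LINT x:{0<..<r1}|lborel. g 1 * (x * f2 x) + g 0 * (f2 x - x * f2 x))"
      by (rule set_lebesgue_integral_cong) (auto simp: algebra_simps)
    also have "\<dots> = g 1 * A2 + g 0 * (1 - A2)"
      using ix f2_set by (simp add: A2_def set_integral_add set_integral_diff)
    finally show ?thesis .
  qed
  have "(LINT x:{0<..<r1}|lborel. gen t1 t2 b g g' x * f2 x)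
      = (LINT x:{0<..<r1}|lborel. (v x * g' x - g x) * f2 x + (g 1 * x + g 0 * (1 - x)) * f2 x)"
    by (rule set_lebesgue_integral_cong) (auto simp: gen_split algebra_simps)
  also have "\<dots> = - g 0 + (g 1 * A2 + g 0 * (1 - A2))" using i1 i2 e1 e2 by (simp add: set_integral_add)
  finally show ?thesis by simp
qed

end

context fv begin

definition "dens m x = m * (indicator {r1<..<1} x * f1 x) + (1 - m) * (indicator {0<..<r1} x * f2 x)"
definition "DM m = density lborel (\<lambda>x. ennreal (dens m x))"
definition "I1 h = (LINT x:{r1<..<1}|lborel. h x * f1 x)"
definition "I2 h = (LINT x:{0<..<r1}|lborel. h x * f2 x)"

lemma dens_nonneg: "0 \<le> m \<Longrightarrow> m \<le> 1 \<Longrightarrow> 0 \<le> dens m x"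
  unfolding dens_def using f1_nonneg f2_nonneg
  by (intro add_nonneg_nonneg mult_nonneg_nonneg) (auto split: split_indicator)

lemma ind_f1_meas: "(\<lambda>x. indicator {r1<..<1} x * f1 x) \<in> borel_measurable borel"
  using borel_measurable_continuous_on_indicator[OF _ f1_facts(3)] by simp
lemma ind_f2_meas: "(\<lambda>x. indicator {0<..<r1} x * f2 x) \<in> borel_measurable borel"
  using borel_measurable_continuous_on_indicator[OF _ f2_facts(3)] by simp

lemma dens_meas: "dens m \<in> borel_measurable borel"
  unfolding dens_def[abs_def] using ind_f1_meas ind_f2_meas by measurable

lemma dens_support: "dens m x = indicator {0..1} x * dens m x"
  unfolding dens_def using r1_pos r1_lt1 by (auto split: split_indicator)

lemma dens_h:
  assumes h: "continuous_on {0..1} h"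
  shows "integrable lborel (\<lambda>x. dens m x * h x)"
    "(LINT x|lborel. dens m x * h x) = m * I1 h + (1 - m) * I2 h"
proof -
  have i1: "integrable lborel (\<lambda>x. indicator {r1<..<1} x * (h x * f1 x))"
    using f1_hint[OF h] unfolding set_integrable_def by simp
  have i2: "integrable lborel (\<lambda>x. indicator {0<..<r1} x * (h x * f2 x))"
    using f2_hint[OF h] unfolding set_integrable_def by simp
  have eq: "(\<lambda>x. dens m x * h x) = (\<lambda>x. m * (indicator {r1<..<1} x * (h x * f1 x)) + (1 - m) * (indicator {0<..<r1} x * (h x * f2 x)))"
    by (rule ext) (simp add: dens_def algebra_simps)
  show "integrable lborel (\<lambda>x. dens m x * h x)" unfolding eq using i1 i2 by simp
  show "(LINT x|lborel. dens m x * h x) = m * I1 h + (1 - m) * I2 h"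
    unfolding eq I1_def I2_def set_lebesgue_integral_def using i1 i2 by simp
qed

lemma I1_one: "I1 (\<lambda>x. 1) = 1" using f1_set(2) by (simp add: I1_def)
lemma I2_one: "I2 (\<lambda>x. 1) = 1" using f2_set(2) by (simp add: I2_def)
lemma I1_id: "I1 (\<lambda>x. x) = A1" by (simp add: I1_def A1_def)
lemma I2_id: "I2 (\<lambda>x. x) = A2" by (simp add: I2_def A2_def)

lemma sets_DM: "sets (DM m) = sets borel" by (simp add: DM_def)

lemma DM_emeasure01:
  assumes m: "0 \<le> m" "m \<le> 1"
  shows "emeasure (DM m) {0..1} = 1" "emeasure (DM m) UNIV = 1"
proof -
  have int: "integrable lborel (dens m)" using dens_h(1)[of "\<lambda>x. 1" m] by simp
  have "(\<integral>\<^sup>+ x. ennreal (dens m x) \<partial>lborel) = ennreal (LINT x|lborel. dens m x)"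
    by (rule nn_integral_eq_integral[OF int]) (use dens_nonneg[OF m] in auto)
  also have "(LINT x|lborel. dens m x) = 1" using dens_h(2)[of "\<lambda>x. 1" m] I1_one I2_one by simp
  finally have N: "(\<integral>\<^sup>+ x. ennreal (dens m x) \<partial>lborel) = 1" by simp
  have "emeasure (DM m) {0..1} = (\<integral>\<^sup>+ x. ennreal (dens m x) * indicator {0..1} x \<partial>lborel)"
    unfolding DM_def using dens_meas by (simp add: emeasure_density)
  also have "\<dots> = (\<integral>\<^sup>+ x. ennreal (dens m x) \<partial>lborel)"
    by (rule nn_integral_cong) (subst (2) dens_support, auto split: split_indicator)
  finally show "emeasure (DM m) {0..1} = 1" using N by simp
  have "emeasure (DM m) UNIV = (\<integral>\<^sup>+ x. ennreal (dens m x) * indicator UNIV x \<partial>lborel)"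
    unfolding DM_def using dens_meas by (subst emeasure_density) auto
  then show "emeasure (DM m) UNIV = 1" using N by simp
qed

lemma DM_prob: "0 \<le> m \<Longrightarrow> m \<le> 1 \<Longrightarrow> prob_space (DM m)"
  using DM_emeasure01 by (intro prob_spaceI) (simp add: DM_def)

lemma DM_int:
  assumes m: "0 \<le> m" "m \<le> 1" and h: "continuous_on {0..1} h"
  shows "(LINT x:{0..1}|DM m. h x) = m * I1 h + (1 - m) * I2 h"
proof -
  have hm: "(\<lambda>x. indicator {0..1} x *\<^sub>R h x) \<in> borel_measurable lborel"
    using borel_measurable_continuous_on_indicator[OF _ h] by simp
  have "(LINT x:{0..1}|DM m. h x) = (LINT x|lborel. dens m x *\<^sub>R (indicator {0..1} x *\<^sub>R h x))"
    unfolding set_lebesgue_integral_def DM_def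
    by (rule integral_density[OF hm]) (use dens_meas dens_nonneg[OF m] in auto)
  also have "\<dots> = (LINT x|lborel. dens m x * h x)"
    by (rule Bochner_Integration.integral_cong) (use r1_pos r1_lt1 in \<open>auto simp: dens_def split: split_indicator\<close>)
  also have "\<dots> = m * I1 h + (1 - m) * I2 h" by (rule dens_h(2)[OF h])
  finally show ?thesis .
qed

lemma gen_cont:
  assumes gd: "\<forall>x\<in>{0..1}. (g has_real_derivative g' x) (at x within {0..1})"
    and g'c: "continuous_on {0..1} g'"
  shows "continuous_on {0..1} (gen t1 t2 b g g')"
proof -
  have gc: "continuous_on {0..1} g" by (rule DERIV_continuous_on) (use gd in auto)
  show ?thesis unfolding gen_def[abs_def] using gc g'c v_cont[of "{0..1}"] by (intro continuous_intros)
qed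

lemma DM_gen:
  assumes m: "0 \<le> m" "m \<le> 1"
    and gd: "\<forall>x\<in>{0..1}. (g has_real_derivative g' x) (at x within {0..1})"
    and g'c: "continuous_on {0..1} g'"
  shows "(LINT x:{0..1}|DM m. gen t1 t2 b g g' x)
    = m * (- g 1 + g 1 * A1 + g 0 * (1 - A1)) + (1 - m) * (- g 0 + g 1 * A2 + g 0 * (1 - A2))"
  using DM_int[OF m gen_cont[OF gd g'c]] f1_gen[OF gd g'c] f2_gen[OF gd g'c]
  by (simp add: I1_def I2_def)

end

lemma set_int_M:
  fixes M :: "real measure" and h :: "real \<Rightarrow> real"
  assumes M: "finite_measure M" "sets M = sets borel" and h: "continuous_on {0..1} h"
  shows "set_integrable M {0..1} h"
proof -
  obtain B where B: "\<And>x. x \<in> {0..1} \<Longrightarrow> \<bar>h x\<bar> \<le> B"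
  proof -
    have "continuous_on {0..1} (\<lambda>x. \<bar>h x\<bar>)" using h by (intro continuous_intros)
    from continuous_attains_sup[OF compact_Icc _ this] obtain x0 where
      "x0 \<in> {0..1::real}" "\<forall>y\<in>{0..1}. \<bar>h y\<bar> \<le> \<bar>h x0\<bar>" by auto
    then show ?thesis using that by blast
  qed
  have "(\<lambda>x. indicator {0..1} x *\<^sub>R h x) \<in> borel_measurable borel"
    using borel_measurable_continuous_on_indicator[OF _ h] by simp
  then have meas: "(\<lambda>x. indicator {0..1} x *\<^sub>R h x) \<in> borel_measurable M"
    by (subst measurable_cong_sets[OF M(2) refl])
  have "integrable M (\<lambda>x. indicator {0..1} x *\<^sub>R h x)"
  proof (rule finite_measure.integrable_const_bound[OF M(1) _ meas, where B="max B 0"])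
    show "AE x in M. norm (indicator {0..1} x *\<^sub>R h x) \<le> max B 0"
      using B by (intro AE_I2) (auto split: split_indicator simp: le_max_iff_disj)
  qed
  then show ?thesis unfolding set_integrable_def .
qed

context fv begin

definition "yy x = (x - r1) / (x - r2)"
definition "yyd n x = real n * ((r1 - r2) / (x - r2)\<^sup>2 * yy x ^ (n - Suc 0))"

lemma yy_pow_deriv: "x \<in> {0..1} \<Longrightarrow> ((\<lambda>x. yy x ^ n) has_real_derivative yyd n x) (at x within {0..1})"
proof -
  assume "x \<in> {0..1}"
  then have "x \<noteq> r2" using r2_neg by auto
  have d: "((\<lambda>x. (x - r1) / (x - r2)) has_real_derivative (r1 - r2) / (x - r2)\<^sup>2) (at x within {0..1})"
    using has_field_derivative_at_within[OF quot_deriv[OF \<open>x \<noteq> r2\<close>, of r1]] .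
  from DERIV_power[OF d]
  show ?thesis unfolding yyd_def yy_def[abs_def] by simp
qed

lemma yy_cont: "continuous_on {0..1} yy"
  unfolding yy_def[abs_def] using r2_neg by (intro continuous_intros) auto

lemma yyd_cont: "continuous_on {0..1} (yyd n)"
  unfolding yyd_def[abs_def] using yy_cont r2_neg by (intro continuous_intros) auto

lemma yy_1: "yy 1 = Y1" by (simp add: yy_def Y1_def)
lemma yy_0: "yy 0 = Y0" by (simp add: yy_def Y0_def)

lemma v_yy: "x \<in> {0..1} \<Longrightarrow> v x * ((r1 - r2) / (x - r2)\<^sup>2) = - cc * yy x"
proof -
  assume "x \<in> {0..1}"
  then have d: "x - r2 \<noteq> 0" using r2_neg by auto
  have gen: "D \<noteq> 0 \<Longrightarrow> - (b / 2) * (X * D) * (R / D\<^sup>2) = - (b * R / 2) * (X / D)" for D X R :: real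
    by (simp add: power2_eq_square field_simps)
  show ?thesis unfolding v_fact cc_def yy_def using gen[OF d] by simp
qed

lemma yy_vg: "x \<in> {0..1} \<Longrightarrow> v x * yyd n x - yy x ^ n = - (1 + real n * cc) * yy x ^ n"
proof -
  assume x: "x \<in> {0..1}"
  have "v x * yyd n x = real n * (v x * ((r1 - r2) / (x - r2)\<^sup>2)) * yy x ^ (n - Suc 0)"
    unfolding yyd_def by (simp add: algebra_simps)
  also have "\<dots> = - (real n * cc) * yy x ^ n"
  proof (cases n)
    case 0 then show ?thesis by simp
  next
    case (Suc k) then show ?thesis unfolding v_yy[OF x] by simp
  qed
  finally show ?thesis by (simp add: algebra_simps)
qed

lemma gd_yy: "\<forall>x\<in>{0..1}. ((\<lambda>x. yy x ^ n) has_real_derivative yyd n x) (at x within {0..1})"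
  using yy_pow_deriv by blast

lemma I1_yy: "I1 (\<lambda>x. yy x ^ n) = Y1 ^ n / (1 + real n * cc)"
proof -
  have e: "(LINT x:{r1<..<1}|lborel. (v x * yyd n x - yy x ^ n) * f1 x) = - ((yy 1) ^ n)"
    using f1_ibp(2)[OF gd_yy yyd_cont] unfolding ival[OF less_imp_le[OF r1_lt1]] .
  have "(LINT x:{r1<..<1}|lborel. (v x * yyd n x - yy x ^ n) * f1 x)
      = (LINT x:{r1<..<1}|lborel. - (1 + real n * cc) * (yy x ^ n * f1 x))"
    by (rule set_lebesgue_integral_cong) (use r1_pos in \<open>auto simp: yy_vg\<close>)
  also have "\<dots> = - (1 + real n * cc) * I1 (\<lambda>x. yy x ^ n)" unfolding I1_def by simp
  finally have "- ((yy 1) ^ n) = - ((1 + real n * cc) * I1 (\<lambda>x. yy x ^ n))" using e by (simp add: algebra_simps)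
  then have "(1 + real n * cc) * I1 (\<lambda>x. yy x ^ n) = Y1 ^ n" using yy_1 by simp
  moreover have "1 + real n * cc > 0" using cc_pos by (simp add: add_pos_nonneg)
  ultimately show ?thesis by (simp add: field_simps)
qed

lemma I2_yy: "I2 (\<lambda>x. yy x ^ n) = Y0 ^ n / (1 + real n * cc)"
proof -
  have e: "(LINT x:{0<..<r1}|lborel. (v x * yyd n x - yy x ^ n) * f2 x) = - ((yy 0) ^ n)"
    using f2_ibp(2)[OF gd_yy yyd_cont] unfolding ival[OF less_imp_le[OF r1_pos]] .
  have "(LINT x:{0<..<r1}|lborel. (v x * yyd n x - yy x ^ n) * f2 x)
      = (LINT x:{0<..<r1}|lborel. - (1 + real n * cc) * (yy x ^ n * f2 x))"
    by (rule set_lebesgue_integral_cong) (use r1_lt1 in \<open>auto simp: yy_vg\<close>)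
  also have "\<dots> = - (1 + real n * cc) * I2 (\<lambda>x. yy x ^ n)" unfolding I2_def by simp
  finally have "- ((yy 0) ^ n) = - ((1 + real n * cc) * I2 (\<lambda>x. yy x ^ n))" using e by (simp add: algebra_simps)
  then have "(1 + real n * cc) * I2 (\<lambda>x. yy x ^ n) = Y0 ^ n" using yy_0 by simp
  moreover have "1 + real n * cc > 0" using cc_pos by (simp add: add_pos_nonneg)
  ultimately show ?thesis by (simp add: field_simps)
qed

lemma stat_moments:
  assumes st: "stationary_gen t1 t2 b M"
  defines "m \<equiv> (LINT x:{0..1}|M. x)"
  shows "0 \<le> m" "m \<le> 1"
    "\<And>n. (LINT x:{0..1}|M. yy x ^ n) = m * I1 (\<lambda>x. yy x ^ n) + (1 - m) * I2 (\<lambda>x. yy x ^ n)"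
proof -
  have P: "prob_space M" and S: "sets M = sets borel" and E: "emeasure M {0..1} = 1"
    and G: "\<And>g g'. \<forall>x\<in>{0..1}. (g has_real_derivative g' x) (at x within {0..1}) \<Longrightarrow>
             continuous_on {0..1} g' \<Longrightarrow> (LINT x:{0..1}|M. gen t1 t2 b g g' x) = 0"
    using st unfolding stationary_gen_def by auto
  have F: "finite_measure M" using P by (simp add: prob_space_def)
  have one: "(LINT x:{0..1}|M. (1::real)) = 1"
  proof -
    have "{0..1} \<in> sets M" using S by simp
    then show ?thesis using set_integral_const[of "{0..1}" M "1::real"] E
      by (simp add: measure_def)
  qed
  have ix: "set_integrable M {0..1} (\<lambda>x::real. x)" by (rule set_int_M[OF F S]) (intro continuous_intros)
  have i1: "set_integrable M {0..1} (\<lambda>x::real. 1::real)" by (rule set_int_M[OF F S]) (intro continuous_intros)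
  show "0 \<le> m" unfolding m_def set_lebesgue_integral_def
    by (rule Bochner_Integration.integral_nonneg) (auto split: split_indicator)
  have "m \<le> (LINT x:{0..1}|M. (1::real))" unfolding m_def by (rule set_integral_mono[OF ix i1]) auto
  then show "m \<le> 1" using one by simp
  fix n
  have iy: "set_integrable M {0..1} (\<lambda>x. yy x ^ n)" by (rule set_int_M[OF F S]) (use yy_cont in \<open>intro continuous_intros\<close>)
  have "0 = (LINT x:{0..1}|M. gen t1 t2 b (\<lambda>x. yy x ^ n) (yyd n) x)" using G[OF gd_yy yyd_cont] by simp
  also have "\<dots> = (LINT x:{0..1}|M. Y1 ^ n * x + Y0 ^ n * (1 - x) + (- (1 + real n * cc)) * yy x ^ n)"
    by (rule set_lebesgue_integral_cong) (use S in \<open>auto simp: gen_split yy_vg yy_1 yy_0 algebra_simps\<close>)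
  also have "\<dots> = Y1 ^ n * m + Y0 ^ n * (1 - m) + (- (1 + real n * cc)) * (LINT x:{0..1}|M. yy x ^ n)"
  proof -
    have a: "set_integrable M {0..1} (\<lambda>x. Y1 ^ n * x)" using ix by simp
    have c: "set_integrable M {0..1} (\<lambda>x. 1 - x)" using set_integral_diff(1)[OF i1 ix] by simp
    have c': "set_integrable M {0..1} (\<lambda>x. Y0 ^ n * (1 - x))" using c by simp
    have d: "set_integrable M {0..1} (\<lambda>x. (- (1 + real n * cc)) * yy x ^ n)" using iy by simp
    have "(LINT x:{0..1}|M. 1 - x) = 1 - m" using set_integral_diff(2)[OF i1 ix] one m_def by simp
    then show ?thesis using a c c' d ix iy m_def
      by (simp add: set_integral_add)
  qed
  finally have "(1 + real n * cc) * (LINT x:{0..1}|M. yy x ^ n) = m * Y1 ^ n + (1 - m) * Y0 ^ n"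
    by (simp add: algebra_simps)
  moreover have "1 + real n * cc > 0" using cc_pos by (simp add: add_pos_nonneg)
  ultimately have "(LINT x:{0..1}|M. yy x ^ n) = (m * Y1 ^ n + (1 - m) * Y0 ^ n) / (1 + real n * cc)"
    by (simp add: eq_divide_eq mult.commute)
  then show "(LINT x:{0..1}|M. yy x ^ n) = m * I1 (\<lambda>x. yy x ^ n) + (1 - m) * I2 (\<lambda>x. yy x ^ n)"
    unfolding I1_yy I2_yy by (simp add: add_divide_distrib)
qed

lemma DM_moments: "0 \<le> m \<Longrightarrow> m \<le> 1 \<Longrightarrow>
    (LINT x:{0..1}|DM m. yy x ^ n) = m * I1 (\<lambda>x. yy x ^ n) + (1 - m) * I2 (\<lambda>x. yy x ^ n)"
  by (rule DM_int) (use yy_cont in \<open>auto intro!: continuous_intros\<close>)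

end

lemma phi_lim:
  fixes s x :: real
  shows "(\<lambda>j. min 1 (max 0 (real (Suc j) * (x - s)))) \<longlonglongrightarrow> indicator {s<..} x"
proof (cases "x > s")
  case True
  obtain N :: nat where N: "1 / (x - s) < real N" using reals_Archimedean2 by blast
  have "eventually (\<lambda>j. min 1 (max 0 (real (Suc j) * (x - s))) = indicator {s<..} x) sequentially"
  proof (rule eventually_sequentiallyI[of N])
    fix j assume "N \<le> j"
    then have "1 / (x - s) < real (Suc j)" using N by linarith
    then have "1 < real (Suc j) * (x - s)" using True by (simp add: field_simps)
    then show "min 1 (max 0 (real (Suc j) * (x - s))) = indicator {s<..} x" using True by simp
  qed
  then show ?thesis by (rule tendsto_eventually)
next
  case False
  then have "\<And>j. min 1 (max 0 (real (Suc j) * (x - s))) = indicator {s<..} x"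
    by (simp add: mult_nonneg_nonpos)
  then show ?thesis by simp
qed

lemma phi_cont: "continuous_on A (\<lambda>x::real. min 1 (max 0 (real (Suc j) * (x - s))))"
  by (intro continuous_intros)

lemma set_int_bound:
  fixes M :: "real measure" and f :: "real \<Rightarrow> real"
  assumes M: "finite_measure M" "sets M = sets borel" "emeasure M {0..1} = 1"
    and f: "continuous_on {0..1} f" and e: "\<And>x. x \<in> {0..1} \<Longrightarrow> \<bar>f x\<bar> \<le> e"
  shows "\<bar>LINT x:{0..1}|M. f x\<bar> \<le> e"
proof -
  have i: "set_integrable M {0..1} f" by (rule set_int_M[OF M(1,2) f])
  have ia: "set_integrable M {0..1} (\<lambda>x. \<bar>f x\<bar>)" by (rule set_int_M[OF M(1,2)]) (use f in \<open>intro continuous_intros\<close>)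
  have ie: "set_integrable M {0..1} (\<lambda>x. e)" by (rule set_int_M[OF M(1,2)]) (intro continuous_intros)
  have "\<bar>LINT x:{0..1}|M. f x\<bar> \<le> (LINT x:{0..1}|M. \<bar>f x\<bar>)"
    using set_integral_norm_bound[OF i] by simp
  also have "\<dots> \<le> (LINT x:{0..1}|M. e)" by (rule set_integral_mono[OF ia ie e])
  also have "\<dots> = e"
  proof -
    have "{0..1} \<in> sets M" using M(2) by simp
    then show ?thesis using set_integral_const[of "{0..1}" M e] M(3) by (simp add: measure_def)
  qed
  finally show ?thesis .
qed

context fv begin

definition "Xinv z = (r1 - r2 * z) / (1 - z)"

lemma Xinv_yy: "x \<in> {0..1} \<Longrightarrow> Xinv (yy x) = x"
proof -
  assume "x \<in> {0..1}"
  then have d: "x - r2 \<noteq> 0" using r2_neg by auto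
  have "1 - yy x = (r1 - r2) / (x - r2)" unfolding yy_def using d by (simp add: field_simps)
  moreover have "r1 - r2 * yy x = x * (r1 - r2) / (x - r2)" unfolding yy_def using d by (simp add: field_simps)
  ultimately show ?thesis unfolding Xinv_def using d nz by simp
qed

lemma yy_range: "x \<in> {0..1} \<Longrightarrow> yy x \<in> {Y0..Y1}"
proof -
  assume x: "x \<in> {0..1}"
  then have d: "x - r2 > 0" using r2_neg by auto
  have e: "yy x = 1 - (r1 - r2) / (x - r2)" unfolding yy_def using d by (simp add: field_simps)
  have "(r1 - r2) / (1 - r2) \<le> (r1 - r2) / (x - r2)"
    using x d r12 by (intro divide_left_mono) auto
  moreover have "(r1 - r2) / (x - r2) \<le> (r1 - r2) / (- r2)"
    using x d r12 r2_neg by (intro divide_left_mono) (auto intro: mult_pos_neg)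
  ultimately show ?thesis unfolding e using one_minus_Y1 one_minus_Y0 by auto
qed

lemma Xinv_alt: "z < 1 \<Longrightarrow> Xinv z = r2 + (r1 - r2) / (1 - z)"
  unfolding Xinv_def by (simp add: field_simps)

lemma Xinv_range: "z \<in> {Y0..Y1} \<Longrightarrow> Xinv z \<in> {0..1}"
proof -
  assume z: "z \<in> {Y0..Y1}"
  then have z1: "z < 1" using Y1_lt1 by auto
  have "(r1 - r2) / (1 - z) \<le> (r1 - r2) / (1 - Y1)"
    using z Y1_lt1 r12 by (intro divide_left_mono) auto
  moreover have "(r1 - r2) / (1 - Y0) \<le> (r1 - r2) / (1 - z)"
    using z Y1_lt1 Y0_neg r12 by (intro divide_left_mono) auto
  moreover have "(r1 - r2) / (1 - Y1) = 1 - r2" unfolding one_minus_Y1 using nz r12 r1_lt1 by simp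
  moreover have "(r1 - r2) / (1 - Y0) = - r2" unfolding one_minus_Y0 using nz by simp
  ultimately show ?thesis unfolding Xinv_alt[OF z1] by auto
qed

lemma Xinv_cont: "continuous_on {Y0..Y1} Xinv"
  unfolding Xinv_def[abs_def] using Y1_lt1 by (intro continuous_intros) auto

lemma poly_int:
  fixes M :: "real measure"
  assumes M: "finite_measure M" "sets M = sets borel"
  shows "(LINT x:{0..1}|M. (\<Sum>i\<le>d. a i * yy x ^ i)) = (\<Sum>i\<le>d. a i * (LINT x:{0..1}|M. yy x ^ i))"
proof -
  have ii: "integrable M (\<lambda>x. indicator {0..1} x *\<^sub>R (a i * yy x ^ i))" for i
  proof -
    have "set_integrable M {0..1} (\<lambda>x. a i * yy x ^ i)" by (rule set_int_M[OF M]) (use yy_cont in \<open>intro continuous_intros\<close>)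
    then show ?thesis by (simp add: set_integrable_def)
  qed
  have "(LINT x:{0..1}|M. (\<Sum>i\<le>d. a i * yy x ^ i)) = (LINT x|M. (\<Sum>i\<le>d. indicator {0..1} x *\<^sub>R (a i * yy x ^ i)))"
    unfolding set_lebesgue_integral_def by (simp only: scaleR_sum_right)
  also have "\<dots> = (\<Sum>i\<le>d. (LINT x|M. indicator {0..1} x *\<^sub>R (a i * yy x ^ i)))"
    by (rule Bochner_Integration.integral_sum) (rule ii)
  also have "\<dots> = (\<Sum>i\<le>d. a i * (LINT x:{0..1}|M. yy x ^ i))"
    unfolding set_lebesgue_integral_def by (intro sum.cong refl) (simp add: ac_simps)
  finally show ?thesis .
qed

lemma cont_eq:
  fixes M N :: "real measure" and h :: "real \<Rightarrow> real"
  assumes M: "finite_measure M" "sets M = sets borel" "emeasure M {0..1} = 1"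
    and N: "finite_measure N" "sets N = sets borel" "emeasure N {0..1} = 1"
    and mom: "\<And>n. (LINT x:{0..1}|M. yy x ^ n) = (LINT x:{0..1}|N. yy x ^ n)"
    and h: "continuous_on {0..1} h"
  shows "(LINT x:{0..1}|M. h x) = (LINT x:{0..1}|N. h x)"
proof (rule ccontr)
  assume ne: "(LINT x:{0..1}|M. h x) \<noteq> (LINT x:{0..1}|N. h x)"
  define d where "d = \<bar>(LINT x:{0..1}|M. h x) - (LINT x:{0..1}|N. h x)\<bar>"
  have d: "d > 0" using ne unfolding d_def by simp
  have hc: "continuous_on {Y0..Y1} (\<lambda>z. h (Xinv z))"
    by (rule continuous_on_compose2[OF h Xinv_cont]) (use Xinv_range in auto)
  obtain p where p: "polynomial_function p" and pe: "\<forall>z\<in>{Y0..Y1}. norm (h (Xinv z) - p z) < d / 4"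
    using Stone_Weierstrass_polynomial_function[OF compact_Icc hc, of "d / 4"] d by auto
  obtain a n where pa: "p = (\<lambda>x. \<Sum>i\<le>n. a i * x ^ i)"
    using p unfolding real_polynomial_function_eq[symmetric] real_polynomial_function_iff_sum by blast
  define q where "q x = (\<Sum>i\<le>n. a i * yy x ^ i)" for x
  have qc: "continuous_on {0..1} q" unfolding q_def[abs_def] using yy_cont by (intro continuous_intros)
  have hq: "\<bar>h x - q x\<bar> \<le> d / 4" if "x \<in> {0..1}" for x
    using pe[rule_format, OF yy_range[OF that]] Xinv_yy[OF that] unfolding q_def pa by simp
  have hqc: "continuous_on {0..1} (\<lambda>x. h x - q x)" using h qc by (intro continuous_intros)
  have iM: "set_integrable M {0..1} h" "set_integrable M {0..1} q" using set_int_M[OF M(1,2)] h qc by auto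
  have iN: "set_integrable N {0..1} h" "set_integrable N {0..1} q" using set_int_M[OF N(1,2)] h qc by auto
  have bM: "\<bar>(LINT x:{0..1}|M. h x) - (LINT x:{0..1}|M. q x)\<bar> \<le> d / 4"
    using set_int_bound[OF M hqc hq] set_integral_diff(2)[OF iM] by simp
  have bN: "\<bar>(LINT x:{0..1}|N. h x) - (LINT x:{0..1}|N. q x)\<bar> \<le> d / 4"
    using set_int_bound[OF N hqc hq] set_integral_diff(2)[OF iN] by simp
  have qq: "(LINT x:{0..1}|M. q x) = (LINT x:{0..1}|N. q x)"
    unfolding q_def poly_int[OF M(1,2)] poly_int[OF N(1,2)] mom ..
  have "d \<le> d / 4 + d / 4" using bM bN qq unfolding d_def by linarith
  then show False using d by simp
qed

lemma mom_unique:
  fixes M N :: "real measure"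
  assumes M: "prob_space M" "sets M = sets borel" "emeasure M {0..1} = 1"
    and N: "prob_space N" "sets N = sets borel" "emeasure N {0..1} = 1"
    and mom: "\<And>n. (LINT x:{0..1}|M. yy x ^ n) = (LINT x:{0..1}|N. yy x ^ n)"
  shows "M = N"
proof -
  have FM: "finite_measure M" using M(1) by (simp add: prob_space_def)
  have FN: "finite_measure N" using N(1) by (simp add: prob_space_def)
  note ce = cont_eq[OF FM M(2,3) FN N(2,3) mom]
  have key: "emeasure K {s<..} = ennreal (LINT x:{0..1}|K. indicator {s<..} x)"
    if K: "prob_space K" "sets K = sets borel" "emeasure K {0..1} = 1" for K :: "real measure" and s
  proof -
    have FK: "finite_measure K" using K(1) by (simp add: prob_space_def)
    have sp: "space K = UNIV" using sets_eq_imp_space_eq[OF K(2)] by simp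
    have "prob_space.prob K {0..1} = 1" using K(3) by (simp add: measure_def)
    then have ae: "AE x in K. x \<in> {0..1}"
      using prob_space.AE_in_set_eq_1[OF K(1), of "{0..1}"] K(2) by simp
    have "emeasure K {s<..} = emeasure K ({s<..} \<inter> {0..1})"
      by (rule emeasure_eq_AE) (use ae K(2) in auto)
    also have "\<dots> = ennreal (measure K ({s<..} \<inter> {0..1}))"
      using finite_measure.emeasure_eq_measure[OF FK] by simp
    also have "measure K ({s<..} \<inter> {0..1}) = (LINT x:{0..1}|K. indicator {s<..} x)"
    proof -
      have "(LINT x:{0..1}|K. indicator {s<..} x) = (LINT x|K. (indicator ({s<..} \<inter> {0..1}) x :: real))"
        unfolding set_lebesgue_integral_def
        by (rule Bochner_Integration.integral_cong) (auto split: split_indicator)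
      also have "\<dots> = measure K ({s<..} \<inter> {0..1} \<inter> space K)" by (rule Bochner_Integration.integral_indicator)
      finally show ?thesis using sp by simp
    qed
    finally show ?thesis .
  qed
  have lim: "(\<lambda>j. LINT x:{0..1}|K. min 1 (max 0 (real (Suc j) * (x - s)))) \<longlonglongrightarrow> (LINT x:{0..1}|K. indicator {s<..} x)"
    if K: "prob_space K" "sets K = sets borel" for K :: "real measure" and s :: real
  proof -
    have FK: "finite_measure K" using K(1) by (simp add: prob_space_def)
    have m1: "(\<lambda>x. indicator {0..1} x *\<^sub>R indicator {s<..} x :: real) \<in> borel_measurable K"
      by (subst measurable_cong_sets[OF K(2) refl]) measurable
    have m2: "(\<lambda>x. indicator {0..1} x *\<^sub>R min 1 (max 0 (real (Suc j) * (x - s)))) \<in> borel_measurable K" for j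
    proof -
      have "(\<lambda>x. indicator {0..1} x *\<^sub>R min 1 (max 0 (real (Suc j) * (x - s)))) \<in> borel_measurable borel"
        using borel_measurable_continuous_on_indicator[OF _ phi_cont] by simp
      then show ?thesis by (subst measurable_cong_sets[OF K(2) refl])
    qed
    have w: "integrable K (\<lambda>x. 1::real)" using finite_measure.integrable_const[OF FK] .
    show ?thesis unfolding set_lebesgue_integral_def
    proof (rule integral_dominated_convergence[OF m1 m2 w])
      show "AE x in K. (\<lambda>i. indicator {0..1} x *\<^sub>R min 1 (max 0 (real (Suc i) * (x - s)))) \<longlonglongrightarrow>
          indicator {0..1} x *\<^sub>R indicator {s<..} x"
        by (intro AE_I2 tendsto_scaleR tendsto_const phi_lim)
      show "AE x in K. norm (indicator {0..1} x *\<^sub>R min 1 (max 0 (real (Suc i) * (x - s)))) \<le> 1" for i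
        by (intro AE_I2) (auto split: split_indicator)
    qed
  qed
  show ?thesis
  proof (rule measure_eqI_lessThan[OF M(2) N(2)])
    show "emeasure M {x<..} < \<infinity>" for x
      using prob_space.emeasure_le_1[OF M(1), of "{x<..}"] by (simp add: le_less_trans)
    fix s
    have "(LINT x:{0..1}|M. indicator {s<..} x) = (LINT x:{0..1}|N. (indicator {s<..} x :: real))"
      using LIMSEQ_unique[OF lim[OF M(1,2), of s]] lim[OF N(1,2), of s] ce[OF phi_cont] by simp
    then show "emeasure M {s<..} = emeasure N {s<..}" using key[OF M] key[OF N] by simp
  qed
qed

end

context fv begin

lemma A1_le1: "A1 \<le> 1"
proof -
  have ix: "set_integrable lborel {r1<..<1} (\<lambda>x. x * f1 x)" by (rule f1_hint) (intro continuous_intros)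
  have "A1 \<le> (LINT x:{r1<..<1}|lborel. f1 x)" unfolding A1_def
  proof (rule set_integral_mono[OF ix f1_set(1)])
    fix x :: real assume "x \<in> {r1<..<1}"
    then show "x * f1 x \<le> f1 x" using f1_nonneg[of x] r1_pos by (intro mult_left_le_one_le) auto
  qed
  then show ?thesis using f1_set(2) by simp
qed

lemma A2_pos: "0 < A2"
proof -
  have ix: "set_integrable lborel {0<..<r1} (\<lambda>x. x * f2 x)" by (rule f2_hint) (intro continuous_intros)
  have int: "integrable lborel (\<lambda>x. indicator {0<..<r1} x * (x * f2 x))"
    using ix unfolding set_integrable_def by simp
  have nn: "AE x in lborel. 0 \<le> indicator {0<..<r1} x * (x * f2 x)"
    using f2_nonneg by (intro AE_I2) (auto split: split_indicator)
  have "A2 \<ge> 0" unfolding A2_def set_lebesgue_integral_def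
    by (rule Bochner_Integration.integral_nonneg) (use f2_nonneg in \<open>auto split: split_indicator\<close>)
  moreover have "A2 \<noteq> 0"
  proof
    assume "A2 = 0"
    then have "(LINT x|lborel. indicator {0<..<r1} x * (x * f2 x)) = 0"
      unfolding A2_def set_lebesgue_integral_def by simp
    then have ae: "AE x in lborel. indicator {0<..<r1} x * (x * f2 x) = 0"
      using integral_nonneg_eq_0_iff_AE[OF int nn] by simp
    have ae2: "AE x in lborel. indicator {0<..<r1} x * f2 x = (0::real)"
      using ae by eventually_elim (auto split: split_indicator)
    have "(LINT x|lborel. indicator {0<..<r1} x * f2 x) = (LINT x|lborel. (0::real))"
      using Bochner_Integration.integral_cong_AE[of "\<lambda>x. indicator {0<..<r1} x * f2 x" lborel "\<lambda>x. 0"] ind_f2_meas ae2 by simp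
    then have "(LINT x:{0<..<r1}|lborel. f2 x) = 0" unfolding set_lebesgue_integral_def by simp
    then show False using f2_set(2) by simp
  qed
  ultimately show ?thesis by simp
qed

lemma stat_density_eq: "\<pi>2 = 1 - \<pi>1 \<Longrightarrow> stat_density t1 t2 b \<pi>1 \<pi>2 x = dens \<pi>1 x"
  unfolding stat_density_def dens_def f1_def f2_def uu_def ww_def kk_def Let_def
  by (simp add: ac_simps)

lemma DM_x: "0 \<le> m \<Longrightarrow> m \<le> 1 \<Longrightarrow> (LINT x:{0..1}|DM m. x) = m * A1 + (1 - m) * A2"
  using DM_int[of m "\<lambda>x. x"] I1_id I2_id by (simp add: continuous_on_id)

end

theorem theorem10:
  fixes \<theta>1 \<theta>2 \<beta> \<pi>1 \<pi>2 :: real and \<mu> \<nu> :: "real \<Rightarrow> real"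
  assumes "\<theta>1 > 0" and "\<theta>2 > 0" and "\<beta> > 0"
    and mu_ode: "\<And>t. t \<ge> 0 \<Longrightarrow> (\<mu> has_real_derivative drift \<theta>1 \<theta>2 \<beta> (\<mu> t)) (at t within {0..})"
    and mu0: "\<mu> 0 = 1"
    and nu_ode: "\<And>t. t \<ge> 0 \<Longrightarrow> (\<nu> has_real_derivative drift \<theta>1 \<theta>2 \<beta> (\<nu> t)) (at t within {0..})"
    and nu0: "\<nu> 0 = 0"
    and pi: "stationary_P \<mu> \<nu> \<pi>1 \<pi>2"
  shows "0 < root1 \<theta>1 \<theta>2 \<beta> \<and> root1 \<theta>1 \<theta>2 \<beta> < 1 \<and> root2 \<theta>1 \<theta>2 \<beta> < 0
    \<and> (\<forall>t\<ge>0. \<mu> t = mu_formula \<theta>1 \<theta>2 \<beta> t \<and> \<nu> t = nu_formula \<theta>1 \<theta>2 \<beta> t)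
    \<and> (\<forall>M. stationary_gen \<theta>1 \<theta>2 \<beta> M \<longleftrightarrow>
           M = density lborel (\<lambda>\<xi>. ennreal (stat_density \<theta>1 \<theta>2 \<beta> \<pi>1 \<pi>2 \<xi>)))"
proof -
  interpret fv \<theta>1 \<theta>2 \<beta> using assms(1-3) by unfold_locales
  have mu_eq: "\<mu> t = sol Y1 t" if "t \<ge> 0" for t
    by (rule ode_unique[OF mu_ode _ _ that]) (auto intro: sol_deriv_within simp: mu0 sol_Y1_0)
  have nu_eq: "\<nu> t = sol Y0 t" if "t \<ge> 0" for t
    by (rule ode_unique[OF nu_ode _ _ that]) (auto intro: sol_deriv_within simp: nu0 sol_Y0_0)
  have part2: "\<forall>t\<ge>0. \<mu> t = mu_formula \<theta>1 \<theta>2 \<beta> t \<and> \<nu> t = nu_formula \<theta>1 \<theta>2 \<beta> t"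
    using mu_eq nu_eq by (simp add: mu_formula_eq nu_formula_eq)
  have P: "\<pi>1 \<ge> 0" "\<pi>2 \<ge> 0" "\<pi>1 + \<pi>2 = 1" "\<pi>1 = \<pi>1 * Pbar \<mu> + \<pi>2 * Pbar \<nu>"
    using pi unfolding stationary_P_def by auto
  have "Pbar \<mu> = (LINT t:{0..}|lborel. exp (- t) * sol Y1 t)"
    unfolding Pbar_def by (rule set_lebesgue_integral_cong) (auto simp: mu_eq)
  also have "\<dots> = A1" unfolding Pbar_mu_eq ival[OF less_imp_le[OF r1_lt1]] A1_def ..
  finally have PA1: "Pbar \<mu> = A1" .
  have "Pbar \<nu> = (LINT t:{0..}|lborel. exp (- t) * sol Y0 t)"
    unfolding Pbar_def by (rule set_lebesgue_integral_cong) (auto simp: nu_eq)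
  also have "\<dots> = A2" unfolding Pbar_nu_eq ival[OF less_imp_le[OF r1_pos]] A2_def ..
  finally have PA2: "Pbar \<nu> = A2" .
  define p where "p = \<pi>1"
  have p01: "0 \<le> p" "p \<le> 1" using P unfolding p_def by auto
  have pi2: "\<pi>2 = 1 - p" using P unfolding p_def by simp
  have rel: "p = p * A1 + (1 - p) * A2" using P(4) PA1 PA2 pi2 unfolding p_def by simp
  have Deq: "density lborel (\<lambda>\<xi>. ennreal (stat_density \<theta>1 \<theta>2 \<beta> \<pi>1 \<pi>2 \<xi>)) = DM p"
    unfolding DM_def p_def using stat_density_eq[OF pi2[unfolded p_def]] by simp
  have statD: "stationary_gen \<theta>1 \<theta>2 \<beta> (DM p)"
    unfolding stationary_gen_def
  proof (intro conjI allI impI)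
    show "prob_space (DM p)" by (rule DM_prob[OF p01])
    show "sets (DM p) = sets borel" by (rule sets_DM)
    show "emeasure (DM p) {0..1} = 1" by (rule DM_emeasure01(1)[OF p01])
    fix g g' :: "real \<Rightarrow> real"
    assume "(\<forall>x\<in>{0..1}. (g has_real_derivative g' x) (at x within {0..1})) \<and> continuous_on {0..1} g'"
    then have gd: "\<forall>x\<in>{0..1}. (g has_real_derivative g' x) (at x within {0..1})"
      and g'c: "continuous_on {0..1} g'" by auto
    have "(LINT x:{0..1}|DM p. gen \<theta>1 \<theta>2 \<beta> g g' x)
      = p * (- g 1 + g 1 * A1 + g 0 * (1 - A1)) + (1 - p) * (- g 0 + g 1 * A2 + g 0 * (1 - A2))"
      by (rule DM_gen[OF p01 gd g'c])
    also have "\<dots> = g 1 * ((p * A1 + (1 - p) * A2) - p) + g 0 * (p - (p * A1 + (1 - p) * A2))"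
      by (simp add: algebra_simps)
    also have "\<dots> = 0" using rel by simp
    finally show "(LINT x:{0..1}|DM p. gen \<theta>1 \<theta>2 \<beta> g g' x) = 0" .
  qed
  have part3: "\<forall>M. stationary_gen \<theta>1 \<theta>2 \<beta> M \<longleftrightarrow> M = DM p"
  proof (intro allI iffI)
    fix M assume st: "stationary_gen \<theta>1 \<theta>2 \<beta> M"
    define m where "m = (LINT x:{0..1}|M. x)"
    have m01: "0 \<le> m" "m \<le> 1" using stat_moments(1,2)[OF st] unfolding m_def by auto
    have MP: "prob_space M" "sets M = sets borel" "emeasure M {0..1} = 1"
      using st unfolding stationary_gen_def by auto
    have MD: "M = DM m"
    proof (rule mom_unique[OF MP DM_prob[OF m01] sets_DM DM_emeasure01(1)[OF m01]])
      fix n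
      show "(LINT x:{0..1}|M. yy x ^ n) = (LINT x:{0..1}|DM m. yy x ^ n)"
        using stat_moments(3)[OF st, of n] DM_moments[OF m01, of n] unfolding m_def by simp
    qed
    have "m = m * A1 + (1 - m) * A2" using DM_x[OF m01] MD unfolding m_def by simp
    then have "(m - p) * (1 - A1 + A2) = 0" using rel by (simp add: algebra_simps)
    moreover have "1 - A1 + A2 > 0" using A1_le1 A2_pos by simp
    ultimately have "m = p" by simp
    then show "M = DM p" using MD by simp
  next
    fix M assume "M = DM p"
    then show "stationary_gen \<theta>1 \<theta>2 \<beta> M" using statD by simp
  qed
  show ?thesis using r1_pos r1_lt1 r2_neg part2 part3 Deq by simp
qed

end
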